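(* For all safe circuits $c,d:a\to b$, if $c$ and $d$ are equal modulo $E$, then $\widetilde{R}[c]$ and $\widetilde{R}[d]$ are equal modulo $E$.
   Context: A circuit is a morphism of the free symmetric strict monoidal category whose objects are natural numbers (tensor = addition) generated by $\mathsf{discard}:1\to 0$, $\mathsf{copy}:1\to 2$, $\mathsf{zero}:0\to1$, $\mathsf{add}:2\to1$, $\mathsf{one}:0\to 1$, $\mathsf{and}:2\to 1$. Composition is diagrammatic ($f;g$ = first $f$ then $g$), $\sigma_{m,n}$ is the symmetry $m+n\to n+m$ ($\sigma=\sigma_{1,1}$), $\mathsf{copy}_n:n\to2n$, $\mathsf{discard}_n:n\to0$ are the evident composites. $E$ is the set of equations: $\mathsf{copy};\sigma=\mathsf{copy}$; $\mathsf{copy};(\mathsf{copy}\otimes \mathrm{id}_1)=\mathsf{copy};(\mathrm{id}_1\otimes\mathsf{copy})$; $\mathsf{copy};(\mathsf{discard}\otimes\mathrm{id}_1)=\mathrm{id}_1$; for every circuit $f:a\to b$, $f;\mathsf{copy}_b=\mathsf{copy}_a;(f\otimes f)$ and $f;\mathsf{discard}_b=\mathsf{discard}_a$; commutativity, associativity and unit laws for $(\mathsf{add},\mathsf{zero})$ and for $(\mathsf{and},\mathsf{one})$; $\mathsf{copy};\mathsf{and}=\mathrm{id}_1$; $\mathsf{copy};\mathsf{add}=\mathsf{discard};\mathsf{zero}$; and distributivity $(\mathrm{id}_1\otimes\mathsf{add});\mathsf{and}=(\mathsf{copy}\otimes\mathrm{id}_2);(\mathrm{id}_1\otimes\sigma\otimes\mathrm{id}_1);(\mathsf{and}\otimes\mathsf{and});\mathsf{add}$.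 "Equal modulo $E$" means related by the smallest congruence (w.r.t. composition and tensor, including the symmetric monoidal laws) containing $E$. Safety: view a circuit as a directed graph whose nodes are wires and whose edges go from each input wire of a generator occurrence to each of its output wires; a circuit $c$ is safe if for every occurrence of $\mathsf{and}$ in $c$, no input port of $c$ reaches both input ports of that $\mathsf{and}$ by forward paths. For each circuit $f:a\to b$ the circuit $\widetilde{R}[f]:a+b\to a$ is defined inductively: $\widetilde{R}[\mathsf{discard}]=\mathsf{discard};\mathsf{zero}$; $\widetilde{R}[\mathsf{copy}]=\mathsf{discard}\otimes\mathsf{add}$; $\widetilde{R}[\mathsf{zero}]=\mathsf{discard}$; $\widetilde{R}[\mathsf{one}]=\mathsf{discard}$; $\widetilde{R}[\mathsf{add}]=\mathsf{discard}\otimes\mathsf{discard}\otimes\mathsf{copy}$; $\widetilde{R}[\mathsf{and}]=(\sigma\otimes\mathsf{copy});(\mathrm{id}_1\otimes\sigma\otimes\mathrm{id}_1);(\mathsf{and}\otimes\mathsf{and})$; $\widetilde{R}[\mathrm{id}_n]=\mathsf{discard}_n\otimes\mathrm{id}_n$; $\widetilde{R}[\sigma_{m,n}]=\mathsf{discard}_{m+n}\otimes\sigma_{n,m}$; for $f:a\to b$, $g:b\to c$, $\widetilde{R}[f;g]=(\mathsf{copy}_a\otimes\mathrm{id}_c);(\mathrm{id}_a\otimes f\otimes \mathrm{id}_c);(\mathrm{id}_a\otimes\widetilde{R}[g]);\widetilde{R}[f]$; for $f:a\to b$, $g:c\to d$, $\widetilde{R}[f\otimes g]=(\mathrm{id}_a\otimes\sigma_{c,b}\otimes\mathrm{id}_d);(\widetilde{R}[f]\otimes\widetilde{R}[g])$.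 *)

theory Defs
  imports Main
begin

datatype gen = Discard | Copy | Zero | Add | One | And

datatype circ = CGen gen | CId nat | CSym nat nat | CSeq circ circ | CPar circ circ

fun gdom :: "gen \<Rightarrow> nat" where
  "gdom Discard = 1" | "gdom Copy = 1" | "gdom Zero = 0"
| "gdom Add = 2" | "gdom One = 0" | "gdom And = 2"

fun gcod :: "gen \<Rightarrow> nat" where
  "gcod Discard = 0" | "gcod Copy = 2" | "gcod Zero = 1"
| "gcod Add = 1" | "gcod One = 1" | "gcod And = 1"

fun cdom :: "circ \<Rightarrow> nat" where
  "cdom (CGen g) = gdom g"
| "cdom (CId n) = n"
| "cdom (CSym m n) = m + n"
| "cdom (CSeq f g) = cdom f"
| "cdom (CPar f g) = cdom f + cdom g"

fun ccod :: "circ \<Rightarrow> nat" where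
  "ccod (CGen g) = gcod g"
| "ccod (CId n) = n"
| "ccod (CSym m n) = n + m"
| "ccod (CSeq f g) = ccod g"
| "ccod (CPar f g) = ccod f + ccod g"

fun wf :: "circ \<Rightarrow> bool" where
  "wf (CGen g) = True"
| "wf (CId n) = True"
| "wf (CSym m n) = True"
| "wf (CSeq f g) = (wf f \<and> wf g \<and> ccod f = cdom g)"
| "wf (CPar f g) = (wf f \<and> wf g)"

definition typed :: "circ \<Rightarrow> nat \<Rightarrow> nat \<Rightarrow> bool" where
  "typed f a b \<longleftrightarrow> wf f \<and> cdom f = a \<and> ccod f = b"

abbreviation "discardc \<equiv> CGen Discard"
abbreviation "copyc \<equiv> CGen Copy"
abbreviation "zeroc \<equiv> CGen Zero"
abbreviation "addc \<equiv> CGen Add"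
abbreviation "onec \<equiv> CGen One"
abbreviation "andc \<equiv> CGen And"
abbreviation "sigma \<equiv> CSym 1 1"

text \<open>copy_n : n -> 2n (outputs x1..xn,x1..xn) and discard_n : n -> 0.\<close>
fun copyn :: "nat \<Rightarrow> circ" where
  "copyn 0 = CId 0"
| "copyn (Suc n) = CSeq (CPar copyc (copyn n)) (CPar (CPar (CId 1) (CSym 1 n)) (CId n))"

fun discardn :: "nat \<Rightarrow> circ" where
  "discardn 0 = CId 0"
| "discardn (Suc n) = CPar discardc (discardn n)"

inductive axE :: "circ \<Rightarrow> circ \<Rightarrow> bool" where
  seq_assoc: "typed f a b \<Longrightarrow> typed g b c \<Longrightarrow> typed h c d \<Longrightarrow>
     axE (CSeq (CSeq f g) h) (CSeq f (CSeq g h))"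
| seq_idl: "typed f a b \<Longrightarrow> axE (CSeq (CId a) f) f"
| seq_idr: "typed f a b \<Longrightarrow> axE (CSeq f (CId b)) f"
| par_assoc: "wf f \<Longrightarrow> wf g \<Longrightarrow> wf h \<Longrightarrow> axE (CPar (CPar f g) h) (CPar f (CPar g h))"
| par_unitl: "wf f \<Longrightarrow> axE (CPar (CId 0) f) f"
| par_unitr: "wf f \<Longrightarrow> axE (CPar f (CId 0)) f"
| interchange: "typed f a b \<Longrightarrow> typed g b c \<Longrightarrow> typed h d e \<Longrightarrow> typed k e x \<Longrightarrow>
     axE (CPar (CSeq f g) (CSeq h k)) (CSeq (CPar f h) (CPar g k))"
| par_id: "axE (CPar (CId m) (CId n)) (CId (m + n))"
| sym_inv: "axE (CSeq (CSym m n) (CSym n m)) (CId (m + n))"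
| sym_nat: "typed f a b \<Longrightarrow> typed g c d \<Longrightarrow>
     axE (CSeq (CPar f g) (CSym b d)) (CSeq (CSym a c) (CPar g f))"
| sym_hex1: "axE (CSym m (n + k)) (CSeq (CPar (CSym m n) (CId k)) (CPar (CId n) (CSym m k)))"
| sym_hex2: "axE (CSym (m + n) k) (CSeq (CPar (CId m) (CSym n k)) (CPar (CSym m k) (CId n)))"
| sym_unitr: "axE (CSym m 0) (CId m)"
| sym_unitl: "axE (CSym 0 m) (CId m)"
| copy_comm: "axE (CSeq copyc sigma) copyc"
| copy_assoc: "axE (CSeq copyc (CPar copyc (CId 1))) (CSeq copyc (CPar (CId 1) copyc))"
| copy_unit: "axE (CSeq copyc (CPar discardc (CId 1))) (CId 1)"
| copy_nat: "typed f a b \<Longrightarrow> axE (CSeq f (copyn b)) (CSeq (copyn a) (CPar f f))"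
| discard_nat: "typed f a b \<Longrightarrow> axE (CSeq f (discardn b)) (discardn a)"
| add_comm: "axE (CSeq sigma addc) addc"
| add_assoc: "axE (CSeq (CPar addc (CId 1)) addc) (CSeq (CPar (CId 1) addc) addc)"
| add_unitl: "axE (CSeq (CPar zeroc (CId 1)) addc) (CId 1)"
| add_unitr: "axE (CSeq (CPar (CId 1) zeroc) addc) (CId 1)"
| and_comm: "axE (CSeq sigma andc) andc"
| and_assoc: "axE (CSeq (CPar andc (CId 1)) andc) (CSeq (CPar (CId 1) andc) andc)"
| and_unitl: "axE (CSeq (CPar onec (CId 1)) andc) (CId 1)"
| and_unitr: "axE (CSeq (CPar (CId 1) onec) andc) (CId 1)"
| copy_and: "axE (CSeq copyc andc) (CId 1)"
| copy_add: "axE (CSeq copyc addc) (CSeq discardc zeroc)"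
| distrib: "axE (CSeq (CPar (CId 1) addc) andc)
     (CSeq (CSeq (CSeq (CPar copyc (CId 2)) (CPar (CPar (CId 1) sigma) (CId 1))) (CPar andc andc)) addc)"

inductive eqE :: "circ \<Rightarrow> circ \<Rightarrow> bool" where
  ax: "axE c d \<Longrightarrow> eqE c d"
| refl: "wf c \<Longrightarrow> eqE c c"
| sym: "eqE c d \<Longrightarrow> eqE d c"
| trans: "eqE c d \<Longrightarrow> eqE d e \<Longrightarrow> eqE c e"
| seq: "eqE f f' \<Longrightarrow> eqE g g' \<Longrightarrow> ccod f = cdom g \<Longrightarrow> eqE (CSeq f g) (CSeq f' g')"
| par: "eqE f f' \<Longrightarrow> eqE g g' \<Longrightarrow> eqE (CPar f g) (CPar f' g')"

text \<open>reach c: input port i of c reaches output port j of c by a forward path in the wire graph.\<close>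
fun greach :: "gen \<Rightarrow> (nat \<times> nat) set" where
  "greach Discard = {}"
| "greach Copy = {(0,0),(0,1)}"
| "greach Zero = {}"
| "greach Add = {(0,0),(1,0)}"
| "greach One = {}"
| "greach And = {(0,0),(1,0)}"

fun reach :: "circ \<Rightarrow> (nat \<times> nat) set" where
  "reach (CGen g) = greach g"
| "reach (CId n) = {(i, i) | i. i < n}"
| "reach (CSym m n) = {(i, n + i) | i. i < m} \<union> {(m + j, j) | j. j < n}"
| "reach (CSeq f g) = reach f O reach g"
| "reach (CPar f g) = reach f \<union> {(cdom f + i, ccod f + j) | i j. (i, j) \<in> reach g}"

definition pre :: "circ \<Rightarrow> nat set \<Rightarrow> nat set" where
  "pre f A = {i. \<exists>k\<in>A. (i, k) \<in> reach f}"

text \<open>For every occurrence of and in c: the sets of input ports of c reaching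
  its first and its second input port.\<close>
fun andreach :: "circ \<Rightarrow> (nat set \<times> nat set) list" where
  "andreach (CGen g) = (if g = And then [({0}, {1})] else [])"
| "andreach (CId n) = []"
| "andreach (CSym m n) = []"
| "andreach (CSeq f g) = andreach f @ map (\<lambda>(A, B). (pre f A, pre f B)) (andreach g)"
| "andreach (CPar f g) = andreach f @ map (\<lambda>(A, B). ((+) (cdom f) ` A, (+) (cdom f) ` B)) (andreach g)"

definition safe :: "circ \<Rightarrow> bool" where
  "safe c \<longleftrightarrow> (\<forall>(A, B) \<in> set (andreach c). A \<inter> B = {})"

fun Rt :: "circ \<Rightarrow> circ" where
  "Rt (CGen Discard) = CSeq discardc zeroc"
| "Rt (CGen Copy) = CPar discardc addc"
| "Rt (CGen Zero) = discardc"
| "Rt (CGen One) = discardc"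
| "Rt (CGen Add) = CPar (CPar discardc discardc) copyc"
| "Rt (CGen And) = CSeq (CSeq (CPar sigma copyc) (CPar (CPar (CId 1) sigma) (CId 1))) (CPar andc andc)"
| "Rt (CId n) = CPar (discardn n) (CId n)"
| "Rt (CSym m n) = CPar (discardn (m + n)) (CSym n m)"
| "Rt (CSeq f g) =
     CSeq (CSeq (CSeq (CPar (copyn (cdom f)) (CId (ccod g)))
                      (CPar (CPar (CId (cdom f)) f) (CId (ccod g))))
                (CPar (CId (cdom f)) (Rt g)))
          (Rt f)"
| "Rt (CPar f g) =
     CSeq (CPar (CPar (CId (cdom f)) (CSym (cdom g) (ccod f))) (CId (ccod g)))
          (CPar (Rt f) (Rt g))"

end

theory Submission
  imports Defs
begin

fun gsem :: "gen \<Rightarrow> bool list \<Rightarrow> bool list" where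
  "gsem Discard xs = []"
| "gsem Copy xs = [xs!0, xs!0]"
| "gsem Zero xs = [False]"
| "gsem Add xs = [xs!0 \<noteq> xs!1]"
| "gsem One xs = [True]"
| "gsem And xs = [xs!0 \<and> xs!1]"

fun sem :: "circ \<Rightarrow> bool list \<Rightarrow> bool list" where
  "sem (CGen g) xs = gsem g xs"
| "sem (CId n) xs = xs"
| "sem (CSym m n) xs = drop m xs @ take m xs"
| "sem (CSeq f g) xs = sem g (sem f xs)"
| "sem (CPar f g) xs = sem f (take (cdom f) xs) @ sem g (drop (cdom f) xs)"

lemma len_gsem: "length (gsem g xs) = gcod g"
  by (cases g) auto

lemma len_sem: "wf c \<Longrightarrow> length xs = cdom c \<Longrightarrow> length (sem c xs) = ccod c"
  by (induction c arbitrary: xs) (auto simp: len_gsem)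

lemma copyn_props: "wf (copyn n) \<and> cdom (copyn n) = n \<and> ccod (copyn n) = n + n"
  by (induction n) auto

lemma discardn_props: "wf (discardn n) \<and> cdom (discardn n) = n \<and> ccod (discardn n) = 0"
  by (induction n) auto

lemma sem_copyn: "length xs = n \<Longrightarrow> sem (copyn n) xs = xs @ xs"
proof (induction n arbitrary: xs)
  case 0 then show ?case by simp
next
  case (Suc n)
  then obtain x ys where xs: "xs = x # ys" "length ys = n" by (cases xs) auto
  show ?case using Suc.IH[OF xs(2)] xs copyn_props[of n] by simp
qed

lemma sem_discardn: "length xs = n \<Longrightarrow> sem (discardn n) xs = []"
  by (induction n arbitrary: xs) (auto simp: discardn_props)

lemma len1: "length xs = Suc 0 \<Longrightarrow> \<exists>a. xs = [a]"
  by (cases xs) auto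
lemma len2: "length xs = Suc (Suc 0) \<Longrightarrow> \<exists>a b. xs = [a, b]"
  by (cases xs; cases "tl xs") auto
lemma len3: "length xs = Suc (Suc (Suc 0)) \<Longrightarrow> \<exists>a b c. xs = [a, b, c]"
  by (cases xs; cases "tl xs"; cases "tl (tl xs)") auto

definition typ_eq :: "circ \<Rightarrow> circ \<Rightarrow> bool" where
  "typ_eq c d \<longleftrightarrow> wf c \<and> wf d \<and> cdom c = cdom d \<and> ccod c = ccod d \<and>
     (\<forall>xs. length xs = cdom c \<longrightarrow> sem c xs = sem d xs)"

lemma split3: "length xs = m + (n + k) \<Longrightarrow> \<exists>A B C. xs = A @ B @ C \<and> length A = m \<and> length B = n \<and> length C = k"
  apply (rule exI[of _ "take m xs"], rule exI[of _ "take n (drop m xs)"], rule exI[of _ "drop (m+n) xs"])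
  apply (simp add: add.assoc[symmetric])
  by (metis append_take_drop_id drop_drop add.commute)

lemma split3': "length xs = m + n + k \<Longrightarrow> \<exists>A B C. xs = A @ B @ C \<and> length A = m \<and> length B = n \<and> length C = k"
  using split3[of xs m n k] by (simp add: add.assoc)

lemma discard_nat_sound: "typed f a b \<Longrightarrow> typ_eq (CSeq f (discardn b)) (discardn a)"
proof -
  assume "typed f a b"
  then have w: "wf f" "cdom f = a" "ccod f = b" by (auto simp: typed_def)
  have d: "wf (discardn k) \<and> cdom (discardn k) = k \<and> ccod (discardn k) = 0" for k
    by (rule discardn_props)
  show ?thesis unfolding typ_eq_def
  proof (intro conjI allI impI)
    fix xs :: "bool list" assume l: "length xs = cdom (CSeq f (discardn b))"
    have "length (sem f xs) = b" using l w len_sem by simp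
    then show "sem (CSeq f (discardn b)) xs = sem (discardn a) xs"
      using l w by (simp add: sem_discardn d)
  next
    show "wf (CSeq f (discardn b))" using w d by simp
  next
    show "wf (discardn a)" using w d by simp
  qed (use w d in simp)+
qed

lemma axE_sound: "axE c d \<Longrightarrow> typ_eq c d"
proof (induction rule: axE.induct)
  case (copy_nat f a b)
  then show ?case using copyn_props[of a] copyn_props[of b]
    by (auto simp: typ_eq_def typed_def sem_copyn len_sem)
next
  case (discard_nat f a b) then show ?case by (rule discard_nat_sound)
next
  case copy_comm then show ?case by (auto simp: typ_eq_def dest!: len1)
next
  case copy_assoc then show ?case by (auto simp: typ_eq_def dest!: len1)
next
  case copy_unit then show ?case by (auto simp: typ_eq_def dest!: len1)
next
  case add_comm then show ?case by (auto simp: typ_eq_def dest!: len2)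
next
  case add_assoc then show ?case by (auto simp: typ_eq_def numeral_3_eq_3 dest!: len3)
next
  case add_unitl then show ?case by (auto simp: typ_eq_def dest!: len1)
next
  case add_unitr then show ?case by (auto simp: typ_eq_def dest!: len1)
next
  case and_comm then show ?case by (auto simp: typ_eq_def dest!: len2)
next
  case and_assoc then show ?case by (auto simp: typ_eq_def numeral_3_eq_3 dest!: len3)
next
  case and_unitl then show ?case by (auto simp: typ_eq_def dest!: len1)
next
  case and_unitr then show ?case by (auto simp: typ_eq_def dest!: len1)
next
  case copy_and then show ?case by (auto simp: typ_eq_def dest!: len1)
next
  case copy_add then show ?case by (auto simp: typ_eq_def dest!: len1)
next
  case distrib then show ?case by (auto simp: typ_eq_def numeral_3_eq_3 dest!: len3)
next
  case (seq_assoc f a b g c h d) then show ?case by (auto simp: typ_eq_def typed_def)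
next
  case (seq_idl f a b) then show ?case by (auto simp: typ_eq_def typed_def)
next
  case (seq_idr f a b) then show ?case by (auto simp: typ_eq_def typed_def len_sem)
next
  case (par_assoc f g h) then show ?case by (auto simp: typ_eq_def take_add drop_take add.commute)
next
  case (par_unitl f) then show ?case by (auto simp: typ_eq_def)
next
  case (par_unitr f) then show ?case by (auto simp: typ_eq_def len_sem)
next
  case (interchange f a b g c h d e k x) then show ?case by (auto simp: typ_eq_def typed_def len_sem)
next
  case (par_id m n) then show ?case by (auto simp: typ_eq_def)
next
  case (sym_inv m n) then show ?case by (auto simp: typ_eq_def)
next
  case (sym_nat f a b g c d) then show ?case by (auto simp: typ_eq_def typed_def len_sem)
next
  case (sym_hex1 m n k) then show ?case
    by (auto simp: typ_eq_def dest!: split3)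
next
  case (sym_hex2 m n k) then show ?case
    by (auto simp: typ_eq_def dest!: split3')
next
  case (sym_unitr m) then show ?case by (auto simp: typ_eq_def)
next
  case (sym_unitl m) then show ?case by (auto simp: typ_eq_def)
qed

lemma eqE_sound: "eqE c d \<Longrightarrow> typ_eq c d"
proof (induction rule: eqE.induct)
  case (seq f f' g g')
  then show ?case by (auto simp: typ_eq_def len_sem)
next
  case (par f f' g g')
  then show ?case by (auto simp: typ_eq_def len_sem)
next
  case (ax c d) then show ?case by (rule axE_sound)
qed (auto simp: typ_eq_def)

lemma len2n: "length xs = 2 \<Longrightarrow> \<exists>a b. xs = [a, b]"
  using len2[of xs] by (simp add: numeral_2_eq_2)

definition xorv :: "bool list \<Rightarrow> bool list \<Rightarrow> bool list" where
  "xorv xs ys = map2 (\<noteq>) xs ys"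

fun dot :: "bool list \<Rightarrow> bool list \<Rightarrow> bool" where
  "dot (x # xs) (y # ys) = ((x \<and> y) \<noteq> dot xs ys)"
| "dot _ _ = False"

lemma dot_append: "length a = length c \<Longrightarrow> dot (a @ b) (c @ d) = (dot a c \<noteq> dot b d)"
  by (induction a c rule: dot.induct) auto

lemma dot_comm: "dot a b = dot b a"
  by (induction a b rule: dot.induct) (auto elim: dot.elims)

lemma dot_xor: "length a = length b \<Longrightarrow> dot z (xorv a b) = (dot z a \<noteq> dot z b)"
  unfolding xorv_def
proof (induction a b arbitrary: z rule: list_induct2)
  case Nil then show ?case by (cases z) auto
next
  case (Cons x xs y ys) then show ?case by (cases z) auto
qed

lemma len_xorv[simp]: "length (xorv a b) = min (length a) (length b)"
  by (simp add: xorv_def)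

lemma nth_xorv[simp]: "i < length a \<Longrightarrow> i < length b \<Longrightarrow> xorv a b ! i = (a ! i \<noteq> b ! i)"
  by (simp add: xorv_def)

lemma take_xorv: "take n (xorv a b) = xorv (take n a) (take n b)"
  unfolding xorv_def by (simp only: take_map take_zip)

lemma drop_xorv: "drop n (xorv a b) = xorv (drop n a) (drop n b)"
  unfolding xorv_def by (simp only: drop_map drop_zip)

lemma xorv_append: "length a = length c \<Longrightarrow> xorv (a @ b) (c @ d) = xorv a c @ xorv b d"
  by (simp add: xorv_def)

lemma xorv_cancel: "length a = length b \<Longrightarrow> xorv a (xorv a b) = b"
  by (rule nth_equalityI) auto

lemma xorv_comm: "xorv a b = xorv b a"
  unfolding xorv_def by (induction a b rule: list_induct2') auto

lemma Rt_props: "wf c \<Longrightarrow> wf (Rt c) \<and> cdom (Rt c) = cdom c + ccod c \<and> ccod (Rt c) = cdom c"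
proof (induction c)
  case (CGen g) then show ?case by (cases g) auto
next
  case (CId n) then show ?case using discardn_props[of n] by auto
next
  case (CSym m n) then show ?case using discardn_props[of "m+n"] by auto
next
  case (CSeq f g) then show ?case using copyn_props[of "cdom f"] by auto
next
  case (CPar f g) then show ?case by auto
qed

lemma sem_Rt_seq:
  assumes "wf f" "wf g" "ccod f = cdom g" "length y = cdom f" "length dz = ccod g"
  shows "sem (Rt (CSeq f g)) (y @ dz) = sem (Rt f) (y @ sem (Rt g) (sem f y @ dz))"
  using assms copyn_props[of "cdom f"] Rt_props[of g] len_sem[of f y]
  by (simp add: sem_copyn)

lemma sem_Rt_par:
  assumes "wf f" "wf g" "length y1 = cdom f" "length y2 = cdom g"
    "length dz1 = ccod f" "length dz2 = ccod g"
  shows "sem (Rt (CPar f g)) (y1 @ y2 @ dz1 @ dz2) = sem (Rt f) (y1 @ dz1) @ sem (Rt g) (y2 @ dz2)"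
  using assms Rt_props[of f] Rt_props[of g]
  by simp

declare Rt.simps[simp del]

definition supp :: "bool list \<Rightarrow> nat set \<Rightarrow> bool" where
  "supp v J \<longleftrightarrow> (\<forall>i<length v. v ! i \<longrightarrow> i \<in> J)"

lemma reach_bound: "wf f \<Longrightarrow> (i, j) \<in> reach f \<Longrightarrow> i < cdom f \<and> j < ccod f"
proof (induction f arbitrary: i j)
  case (CGen g) then show ?case by (cases g) auto
next
  case (CPar f g) then show ?case apply auto using CPar.IH by fastforce+
qed auto

lemma dep:
  assumes "wf f" "length y = cdom f" "length v = cdom f" "supp v J" "k < ccod f"
    "\<forall>j\<in>J. (j, k) \<notin> reach f"
  shows "sem f (xorv y v) ! k = sem f y ! k"
  using assms
proof (induction f arbitrary: y v J k)
  case (CGen g)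
  then show ?case
    by (cases g) (auto simp: supp_def dest!: len1 len2 len2n)
next
  case (CId n) then show ?case by (auto simp: supp_def)
next
  case (CSym m n)
  then show ?case
  proof -
    have a: "k - n < m + n" if "\<not> k < n" using CSym.prems that by simp
    have b: "k = n + (k - n)" if "\<not> k < n" using that by simp
    show ?thesis using CSym.prems a by (auto simp: supp_def nth_append min_def) (metis le_add_diff_inverse not_less)+
  qed
next
  case (CSeq f g)
  let ?u = "sem f (xorv y v)"
  let ?w = "xorv ?u (sem f y)"
  define J' where "J' = {j. \<exists>i\<in>J. (i, j) \<in> reach f}"
  have lu: "length ?u = ccod f" using CSeq.prems len_sem by simp
  have ly: "length (sem f y) = ccod f" using CSeq.prems len_sem by simp
  have u: "?u = xorv (sem f y) ?w"
    using lu ly by (simp add: xorv_comm[of ?u] xorv_cancel)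
  have sw: "supp ?w J'"
    unfolding supp_def
  proof (intro allI impI)
    fix j assume j: "j < length ?w" "?w ! j"
    show "j \<in> J'"
    proof (rule ccontr)
      assume "j \<notin> J'"
      then have "\<forall>i\<in>J. (i, j) \<notin> reach f" by (auto simp: J'_def)
      then have "?u ! j = sem f y ! j"
        using CSeq.IH(1)[of y v J j] CSeq.prems j lu ly by simp
      then show False using j lu ly by simp
    qed
  qed
  have "sem g (xorv (sem f y) ?w) ! k = sem g (sem f y) ! k"
    apply (rule CSeq.IH(2)[of _ _ J'])
    using CSeq.prems sw ly lu by (auto simp: J'_def)
  then show ?case using u by simp
next
  case (CPar f g)
  have tx: "take (cdom f) (xorv y v) = xorv (take (cdom f) y) (take (cdom f) v)"
    by (rule take_xorv)
  have dx: "drop (cdom f) (xorv y v) = xorv (drop (cdom f) y) (drop (cdom f) v)"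
    by (rule drop_xorv)
  show ?case
  proof (cases "k < ccod f")
    case True
    have "sem f (xorv (take (cdom f) y) (take (cdom f) v)) ! k = sem f (take (cdom f) y) ! k"
      apply (rule CPar.IH(1)[of _ _ J])
      using CPar.prems True by (auto simp: supp_def)
    then show ?thesis using True CPar.prems len_sem[of f] tx by (simp add: nth_append)
  next
    case False
    define J2 where "J2 = {j. cdom f + j \<in> J}"
    have "sem g (xorv (drop (cdom f) y) (drop (cdom f) v)) ! (k - ccod f) = sem g (drop (cdom f) y) ! (k - ccod f)"
      apply (rule CPar.IH(2)[of _ _ J2])
      using CPar.prems False by (auto simp: supp_def J2_def)
    then show ?thesis using False CPar.prems len_sem[of f] dx by (simp add: nth_append)
  qed
qed

lemma dep_supp:
  assumes "wf f" "length y = cdom f" "length v = cdom f" "supp v J"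
  shows "supp (xorv (sem f (xorv y v)) (sem f y)) {j. \<exists>i\<in>J. (i, j) \<in> reach f}"
  unfolding supp_def
proof (intro allI impI)
  let ?u = "sem f (xorv y v)"
  let ?w = "xorv ?u (sem f y)"
  have lu: "length ?u = ccod f" using assms len_sem by simp
  have ly: "length (sem f y) = ccod f" using assms len_sem by simp
  fix j assume j: "j < length ?w" "?w ! j"
  show "j \<in> {j. \<exists>i\<in>J. (i, j) \<in> reach f}"
  proof (rule ccontr)
    assume "j \<notin> {j. \<exists>i\<in>J. (i, j) \<in> reach f}"
    then have "\<forall>i\<in>J. (i, j) \<notin> reach f" by auto
    then have "?u ! j = sem f y ! j"
      using dep[of f y v J j] assms j lu ly by simp
    then show False using j lu ly by simp
  qed
qed

definition jl :: "circ \<Rightarrow> nat set \<Rightarrow> bool" where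
  "jl c J \<longleftrightarrow> (\<forall>p\<in>set (andreach c). fst p \<inter> J = {} \<or> snd p \<inter> J = {})"

lemma xorv_cancel2: "length a = length b \<Longrightarrow> xorv (xorv a b) a = b"
  by (rule nth_equalityI) auto

lemma len0: "length xs = 0 \<Longrightarrow> xs = []" by simp

lemma split2: "length xs = m + n \<Longrightarrow> \<exists>A B. xs = A @ B \<and> length A = m \<and> length B = n"
  by (rule exI[of _ "take m xs"], rule exI[of _ "drop m xs"]) simp

lemma adj:
  assumes "wf c" "length y = cdom c" "length v = cdom c" "length dz = ccod c" "supp v J" "jl c J"
  shows "dot dz (xorv (sem c (xorv y v)) (sem c y)) = dot v (sem (Rt c) (y @ dz))"
  using assms
proof (induction c arbitrary: y v dz J)
  case (CGen g)
  show ?case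
  proof (cases g)
    case And
    then show ?thesis using CGen.prems
      by (auto simp: supp_def jl_def xorv_def Rt.simps dest!: len1 len2 len2n)
  qed (use CGen.prems in \<open>auto simp: xorv_def Rt.simps dest!: len1 len2 len2n\<close>)
next
  case (CId n)
  then show ?case using discardn_props[of n]
    by (simp add: sem_discardn xorv_cancel2 dot_comm Rt.simps)
next
  case (CSym m n)
  obtain A B where v: "v = A @ B" "length A = m" "length B = n"
    using split2[of v m n] CSym.prems by auto
  obtain Y1 Y2 where y: "y = Y1 @ Y2" "length Y1 = m" "length Y2 = n"
    using split2[of y m n] CSym.prems by auto
  obtain C D where dz: "dz = C @ D" "length C = n" "length D = m"
    using split2[of dz n m] CSym.prems by auto
  show ?case using v y dz discardn_props[of "m+n"]
    by (simp add: sem_discardn xorv_append xorv_cancel2 dot_append dot_comm Rt.simps) blast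
next
  case (CSeq f g)
  let ?u = "sem f (xorv y v)"
  let ?w = "xorv ?u (sem f y)"
  define J' where "J' = {j. \<exists>i\<in>J. (i, j) \<in> reach f}"
  have lu: "length ?u = ccod f" using CSeq.prems len_sem by simp
  have ly: "length (sem f y) = ccod f" using CSeq.prems len_sem by simp
  have u: "?u = xorv (sem f y) ?w"
    using lu ly by (simp add: xorv_comm[of ?u] xorv_cancel)
  have sw: "supp ?w J'" unfolding J'_def
    by (rule dep_supp) (use CSeq.prems in auto)
  have jlf: "jl f J" using CSeq.prems by (auto simp: jl_def)
  have jlg: "jl g J'"
    unfolding jl_def
  proof
    fix p assume p: "p \<in> set (andreach g)"
    obtain A B where pAB: "p = (A, B)" by (cases p)
    have mem: "(pre f A, pre f B) \<in> set (andreach (CSeq f g))" using p pAB by force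
    have "pre f A \<inter> J = {} \<or> pre f B \<inter> J = {}"
      using CSeq.prems(6)[unfolded jl_def, rule_format, OF mem] by simp
    then show "fst p \<inter> J' = {} \<or> snd p \<inter> J' = {}"
      using pAB by (auto simp: J'_def pre_def)
  qed
  have lr: "length (sem (Rt g) (sem f y @ dz)) = ccod f"
    using Rt_props[of g] CSeq.prems ly len_sem[of "Rt g"] by simp
  have "dot dz (xorv (sem (CSeq f g) (xorv y v)) (sem (CSeq f g) y))
      = dot dz (xorv (sem g (xorv (sem f y) ?w)) (sem g (sem f y)))"
    using u by simp
  also have "\<dots> = dot ?w (sem (Rt g) (sem f y @ dz))"
    by (rule CSeq.IH(2)) (use CSeq.prems ly lu sw jlg in auto)
  also have "\<dots> = dot (sem (Rt g) (sem f y @ dz)) ?w" by (rule dot_comm)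
  also have "\<dots> = dot v (sem (Rt f) (y @ sem (Rt g) (sem f y @ dz)))"
    by (rule CSeq.IH(1)) (use CSeq.prems jlf lr in auto)
  also have "\<dots> = dot v (sem (Rt (CSeq f g)) (y @ dz))"
  proof -
    have wfs: "wf f" "wf g" "ccod f = cdom g" using CSeq.prems(1) by simp_all
    have "sem (Rt (CSeq f g)) (y @ dz) = sem (Rt f) (y @ sem (Rt g) (sem f y @ dz))"
      by (rule sem_Rt_seq) (use wfs CSeq.prems(2,4) in simp_all)
    then show ?thesis by (simp only:)
  qed
  finally show ?case .
next
  case (CPar f g)
  obtain v1 v2 where v: "v = v1 @ v2" "length v1 = cdom f" "length v2 = cdom g"
    using split2[of v "cdom f" "cdom g"] CPar.prems(3) by auto
  obtain y1 y2 where y: "y = y1 @ y2" "length y1 = cdom f" "length y2 = cdom g"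
    using split2[of y "cdom f" "cdom g"] CPar.prems(2) by auto
  obtain d1 d2 where dz: "dz = d1 @ d2" "length d1 = ccod f" "length d2 = ccod g"
    using split2[of dz "ccod f" "ccod g"] CPar.prems(4) by auto
  define J2 where "J2 = {j. cdom f + j \<in> J}"
  have jlf: "jl f J" using CPar.prems by (auto simp: jl_def)
  have jlg: "jl g J2"
    unfolding jl_def
  proof
    fix p assume p: "p \<in> set (andreach g)"
    obtain A B where pAB: "p = (A, B)" by (cases p)
    have mem: "((+) (cdom f) ` A, (+) (cdom f) ` B) \<in> set (andreach (CPar f g))" using p pAB by force
    have "(+) (cdom f) ` A \<inter> J = {} \<or> (+) (cdom f) ` B \<inter> J = {}"
      using CPar.prems(6)[unfolded jl_def, rule_format, OF mem] by simp
    then show "fst p \<inter> J2 = {} \<or> snd p \<inter> J2 = {}"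
      using pAB by (auto simp: J2_def)
  qed
  have s1: "supp v1 J" using CPar.prems v by (auto simp: supp_def nth_append)
  have s2: "supp v2 J2" using CPar.prems v
    by (auto simp: supp_def nth_append J2_def dest: spec[of _ "cdom f + _"])
  have e1: "dot d1 (xorv (sem f (xorv y1 v1)) (sem f y1)) = dot v1 (sem (Rt f) (y1 @ d1))"
    by (rule CPar.IH(1)) (use CPar.prems v y dz s1 jlf in auto)
  have e2: "dot d2 (xorv (sem g (xorv y2 v2)) (sem g y2)) = dot v2 (sem (Rt g) (y2 @ d2))"
    by (rule CPar.IH(2)) (use CPar.prems v y dz s2 jlg in auto)
  have l1: "length (sem (Rt f) (y1 @ d1)) = cdom f"
    using Rt_props[of f] CPar.prems y dz len_sem[of "Rt f"] by simp
  have wfs: "wf f" "wf g" using CPar.prems(1) by simp_all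
  have r: "sem (Rt (CPar f g)) (y @ dz) = sem (Rt f) (y1 @ d1) @ sem (Rt g) (y2 @ d2)"
    using sem_Rt_par[OF wfs y(2,3) dz(2,3)] y(1) dz(1) by (simp del: Rt.simps)
  have s: "sem (CPar f g) (xorv y v) = sem f (xorv y1 v1) @ sem g (xorv y2 v2)"
    using v y by (simp add: xorv_append)
  have s': "sem (CPar f g) y = sem f y1 @ sem g y2"
    using y by simp
  have la: "length (sem f (xorv y1 v1)) = ccod f" "length (sem f y1) = ccod f"
    using len_sem wfs v y by simp_all
  have lx: "length (xorv (sem f (xorv y1 v1)) (sem f y1)) = ccod f" using la by simp
  have L: "xorv (sem (CPar f g) (xorv y v)) (sem (CPar f g) y) =
      xorv (sem f (xorv y1 v1)) (sem f y1) @ xorv (sem g (xorv y2 v2)) (sem g y2)"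
    unfolding s s' using la by (simp add: xorv_append)
  have "dot dz (xorv (sem (CPar f g) (xorv y v)) (sem (CPar f g) y)) =
     (dot d1 (xorv (sem f (xorv y1 v1)) (sem f y1)) \<noteq> dot d2 (xorv (sem g (xorv y2 v2)) (sem g y2)))"
    unfolding L dz(1) using lx dz(2) by (simp add: dot_append)
  also have "\<dots> = (dot v1 (sem (Rt f) (y1 @ d1)) \<noteq> dot v2 (sem (Rt g) (y2 @ d2)))"
    using e1 e2 by simp
  also have "\<dots> = dot v (sem (Rt (CPar f g)) (y @ dz))"
    unfolding r v(1) using l1 v(2) by (simp add: dot_append)
  finally show ?case .
qed


lemma dot_unit: "length r = n \<Longrightarrow> i < n \<Longrightarrow> dot ((replicate n False)[i := True]) r = r ! i"
proof (induction r arbitrary: n i)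
  case Nil then show ?case by simp
next
  case (Cons x r)
  then obtain n' where n: "n = Suc n'" by (cases n) auto
  show ?case
  proof (cases i)
    case 0
    have "dot (replicate n' False) r = False" by (induction r arbitrary: n') (auto, case_tac n', auto)
    then show ?thesis using n 0 by simp
  next
    case (Suc i') then show ?thesis using n Cons by simp
  qed
qed

lemma safe_jl: "safe c \<Longrightarrow> jl c {i}"
  unfolding safe_def jl_def by fastforce

lemma Rt_sem_det:
  assumes "typed c a b" "typed d a b" "safe c" "safe d"
    "\<forall>xs. length xs = a \<longrightarrow> sem c xs = sem d xs"
  shows "\<forall>zs. length zs = a + b \<longrightarrow> sem (Rt c) zs = sem (Rt d) zs"
proof (intro allI impI)
  fix zs :: "bool list" assume lz: "length zs = a + b"
  obtain x dy where z: "zs = x @ dy" "length x = a" "length dy = b"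
    using split2[OF lz] by auto
  have wc: "wf c" "cdom c = a" "ccod c = b" and wd: "wf d" "cdom d = a" "ccod d = b"
    using assms unfolding typed_def by auto
  have lrc: "length (sem (Rt c) zs) = a" using Rt_props[of c] wc lz len_sem[of "Rt c" zs] by simp
  have lrd: "length (sem (Rt d) zs) = a" using Rt_props[of d] wd lz len_sem[of "Rt d" zs] by simp
  show "sem (Rt c) zs = sem (Rt d) zs"
  proof (rule nth_equalityI)
    show "length (sem (Rt c) zs) = length (sem (Rt d) zs)" using lrc lrd by simp
  next
    fix i assume "i < length (sem (Rt c) zs)"
    then have i: "i < a" using lrc by simp
    let ?e = "(replicate a False)[i := True]"
    have se: "supp ?e {i}" unfolding supp_def
    proof (intro allI impI)
      fix j assume "j < length ?e" "?e ! j" then show "j \<in> {i}" by (cases "j = i") auto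
    qed
    have "sem (Rt c) zs ! i = dot ?e (sem (Rt c) (x @ dy))" using dot_unit[OF lrc i] z by simp
    also have "\<dots> = dot dy (xorv (sem c (xorv x ?e)) (sem c x))"
      by (rule adj[symmetric, of _ _ _ _ "{i}"]) (use wc z se safe_jl[OF assms(3)] in auto)
    also have "\<dots> = dot dy (xorv (sem d (xorv x ?e)) (sem d x))"
      using assms(5) z by simp
    also have "\<dots> = dot ?e (sem (Rt d) (x @ dy))"
      by (rule adj[of _ _ _ _ "{i}"]) (use wd z se safe_jl[OF assms(4)] in auto)
    also have "\<dots> = sem (Rt d) zs ! i" using dot_unit[OF lrd i] z by simp
    finally show "sem (Rt c) zs ! i = sem (Rt d) zs ! i" .
  qed
qed

lemma eqE_wf: "eqE c d \<Longrightarrow> wf c \<and> wf d \<and> cdom c = cdom d \<and> ccod c = ccod d"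
  using eqE_sound typ_eq_def by blast

lemma part_equivp_eqE: "part_equivp eqE"
proof (rule part_equivpI)
  show "\<exists>x. eqE x x" using eqE.refl[of "CId 0"] by auto
  show "symp eqE" by (auto intro: sympI eqE.sym)
  show "transp eqE" by (auto intro: transpI eqE.trans)
qed

quotient_type mor = circ / partial: eqE
  by (rule part_equivp_eqE)

lift_definition dm :: "mor \<Rightarrow> nat" is cdom using eqE_wf by blast
lift_definition cd :: "mor \<Rightarrow> nat" is ccod using eqE_wf by blast
lift_definition Gm :: "gen \<Rightarrow> mor" is CGen by (rule eqE.refl) simp
lift_definition Im :: "nat \<Rightarrow> mor" is CId by (rule eqE.refl) simp
lift_definition Sy :: "nat \<Rightarrow> nat \<Rightarrow> mor" is CSym by (rule eqE.refl) simp
lift_definition Sq :: "mor \<Rightarrow> mor \<Rightarrow> mor" is "\<lambda>f g. if ccod f = cdom g then CSeq f g else CId 0"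
proof -
  fix f f' g g' assume a: "eqE f f'" "eqE g g'"
  show "eqE (if ccod f = cdom g then CSeq f g else CId 0) (if ccod f' = cdom g' then CSeq f' g' else CId 0)"
    using a eqE_wf[OF a(1)] eqE_wf[OF a(2)] by (auto intro: eqE.seq eqE.refl)
qed
lift_definition Pr :: "mor \<Rightarrow> mor \<Rightarrow> mor" is CPar by (rule eqE.par)
lift_definition evc :: "circ \<Rightarrow> mor" is "\<lambda>c. if wf c then c else CId 0"
  by (auto intro: eqE.refl)

lemma evc_eq_eqE: "wf p \<Longrightarrow> wf q \<Longrightarrow> evc p = evc q \<Longrightarrow> eqE p q"
  by transfer simp

lemma evc_Seq: "wf f \<Longrightarrow> wf g \<Longrightarrow> ccod f = cdom g \<Longrightarrow> evc (CSeq f g) = Sq (evc f) (evc g)"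
  by transfer (auto intro: eqE.refl)

lemma evc_Par: "wf f \<Longrightarrow> wf g \<Longrightarrow> evc (CPar f g) = Pr (evc f) (evc g)"
  by transfer (auto intro: eqE.refl)

lemma evc_Gen: "evc (CGen g) = Gm g" by transfer (auto intro: eqE.refl)
lemma evc_Id: "evc (CId n) = Im n" by transfer (auto intro: eqE.refl)
lemma evc_Sym: "evc (CSym m n) = Sy m n" by transfer (auto intro: eqE.refl)

lemma dm_evc: "wf c \<Longrightarrow> dm (evc c) = cdom c" by transfer simp
lemma cd_evc: "wf c \<Longrightarrow> cd (evc c) = ccod c" by transfer simp

definition cpn :: "nat \<Rightarrow> mor" where "cpn n = evc (copyn n)"
definition dcn :: "nat \<Rightarrow> mor" where "dcn n = evc (discardn n)"

abbreviation "disc \<equiv> Gm Discard"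
abbreviation "cp \<equiv> Gm Copy"
abbreviation "zr \<equiv> Gm Zero"
abbreviation "ad \<equiv> Gm Add"
abbreviation "on \<equiv> Gm One"
abbreviation "an \<equiv> Gm And"

notation Sq (infixr "\<Zsemi>" 55)
notation Pr (infixr "\<otimes>" 65)

lemma dm_Sq: "dm (f \<Zsemi> g) = (if cd f = dm g then dm f else 0)" by transfer simp
lemma cd_Sq: "cd (f \<Zsemi> g) = (if cd f = dm g then cd g else 0)" by transfer simp
lemma dm_Pr[simp]: "dm (f \<otimes> g) = dm f + dm g" by transfer simp
lemma cd_Pr[simp]: "cd (f \<otimes> g) = cd f + cd g" by transfer simp
lemma dm_Gm[simp]: "dm (Gm g) = gdom g" by transfer simp
lemma cd_Gm[simp]: "cd (Gm g) = gcod g" by transfer simp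
lemma dm_Im[simp]: "dm (Im n) = n" by transfer simp
lemma cd_Im[simp]: "cd (Im n) = n" by transfer simp
lemma dm_Sy[simp]: "dm (Sy m n) = m + n" by transfer simp
lemma cd_Sy[simp]: "cd (Sy m n) = n + m" by transfer simp
lemma dm_Sq'[simp]: "cd f = dm g \<Longrightarrow> dm (f \<Zsemi> g) = dm f" by (simp add: dm_Sq)
lemma cd_Sq'[simp]: "cd f = dm g \<Longrightarrow> cd (f \<Zsemi> g) = cd g" by (simp add: cd_Sq)
lemma dm_cpn[simp]: "dm (cpn n) = n" unfolding cpn_def using copyn_props[of n] by (simp add: dm_evc)
lemma cd_cpn[simp]: "cd (cpn n) = n + n" unfolding cpn_def using copyn_props[of n] by (simp add: cd_evc)
lemma dm_dcn[simp]: "dm (dcn n) = n" unfolding dcn_def using discardn_props[of n] by (simp add: dm_evc)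
lemma cd_dcn[simp]: "cd (dcn n) = 0" unfolding dcn_def using discardn_props[of n] by (simp add: cd_evc)

lemma cpn_0: "cpn 0 = Im 0" unfolding cpn_def by (simp add: evc_Id)
lemma cpn_Suc: "cpn (Suc n) = (cp \<otimes> cpn n) \<Zsemi> ((Im 1 \<otimes> Sy 1 n) \<otimes> Im n)"
  unfolding cpn_def using copyn_props[of n]
  by (simp add: evc_Seq evc_Par evc_Gen evc_Id evc_Sym)
lemma dcn_0: "dcn 0 = Im 0" unfolding dcn_def by (simp add: evc_Id)
lemma dcn_Suc: "dcn (Suc n) = disc \<otimes> dcn n"
  unfolding dcn_def using discardn_props[of n]
  by (simp add: evc_Par evc_Gen)

lemma Sq_assoc: "cd f = dm g \<Longrightarrow> cd g = dm h \<Longrightarrow> (f \<Zsemi> g) \<Zsemi> h = f \<Zsemi> (g \<Zsemi> h)"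
  by transfer (auto intro!: eqE.ax axE.seq_assoc simp: typed_def dest: eqE_wf)
lemma Sq_idl: "dm f = a \<Longrightarrow> Im a \<Zsemi> f = f"
  by transfer (auto intro!: eqE.ax axE.seq_idl simp: typed_def dest: eqE_wf)
lemma Sq_idr: "cd f = b \<Longrightarrow> f \<Zsemi> Im b = f"
  by transfer (auto intro!: eqE.ax axE.seq_idr simp: typed_def dest: eqE_wf)
lemma Pr_assoc: "(f \<otimes> g) \<otimes> h = f \<otimes> (g \<otimes> h)"
  by transfer (auto intro!: eqE.ax axE.par_assoc dest: eqE_wf)
lemma Pr_unitl: "Im 0 \<otimes> f = f"
  by transfer (auto intro!: eqE.ax axE.par_unitl dest: eqE_wf)
lemma Pr_unitr: "f \<otimes> Im 0 = f"
  by transfer (auto intro!: eqE.ax axE.par_unitr dest: eqE_wf)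
lemma ich: "cd f = dm g \<Longrightarrow> cd h = dm k \<Longrightarrow> (f \<otimes> h) \<Zsemi> (g \<otimes> k) = (f \<Zsemi> g) \<otimes> (h \<Zsemi> k)"
  by transfer (auto intro!: eqE.sym[OF eqE.ax[OF axE.interchange]] simp: typed_def dest: eqE_wf)
lemma Pr_Im: "Im m \<otimes> Im n = Im (m + n)"
  by transfer (use axE.par_id in \<open>auto intro: eqE.ax\<close>)
lemma sym_inv: "Sy m n \<Zsemi> Sy n m = Im (m + n)"
  by transfer (use axE.sym_inv in \<open>auto intro: eqE.ax\<close>)
lemma sym_nat: "(f \<otimes> g) \<Zsemi> Sy (cd f) (cd g) = Sy (dm f) (dm g) \<Zsemi> (g \<otimes> f)"
  by transfer (auto intro!: eqE.ax axE.sym_nat simp: typed_def dest: eqE_wf)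
lemma sym_hex1: "Sy m (n + k) = (Sy m n \<otimes> Im k) \<Zsemi> (Im n \<otimes> Sy m k)"
  by transfer (use axE.sym_hex1 in \<open>auto intro: eqE.ax\<close>)
lemma sym_hex2: "Sy (m + n) k = (Im m \<otimes> Sy n k) \<Zsemi> (Sy m k \<otimes> Im n)"
  by transfer (use axE.sym_hex2 in \<open>auto intro: eqE.ax\<close>)
lemma sym_unitr: "Sy m 0 = Im m"
  by transfer (use axE.sym_unitr in \<open>auto intro: eqE.ax\<close>)
lemma sym_unitl: "Sy 0 m = Im m"
  by transfer (use axE.sym_unitl in \<open>auto intro: eqE.ax\<close>)

lemma copy_comm: "cp \<Zsemi> Sy 1 1 = cp"
  by transfer (use axE.copy_comm in \<open>auto intro: eqE.ax\<close>)
lemma copy_assoc: "cp \<Zsemi> (cp \<otimes> Im 1) = cp \<Zsemi> (Im 1 \<otimes> cp)"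
  by transfer (use axE.copy_assoc in \<open>auto intro: eqE.ax\<close>)
lemma copy_unit: "cp \<Zsemi> (disc \<otimes> Im 1) = Im 1"
  by transfer (use axE.copy_unit in \<open>auto intro: eqE.ax\<close>)
lemma copy_nat: "f \<Zsemi> cpn (cd f) = cpn (dm f) \<Zsemi> (f \<otimes> f)"
  unfolding cpn_def
  by transfer (auto intro!: eqE.ax axE.copy_nat simp: typed_def copyn_props dest: eqE_wf)
lemma discard_nat: "f \<Zsemi> dcn (cd f) = dcn (dm f)"
  unfolding dcn_def
  by transfer (auto intro!: eqE.ax axE.discard_nat simp: typed_def discardn_props dest: eqE_wf)
lemma add_comm: "Sy 1 1 \<Zsemi> ad = ad"
  by transfer (use axE.add_comm in \<open>auto intro: eqE.ax\<close>)
lemma add_assoc: "(ad \<otimes> Im 1) \<Zsemi> ad = (Im 1 \<otimes> ad) \<Zsemi> ad"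
  by transfer (use axE.add_assoc in \<open>auto intro: eqE.ax\<close>)
lemma add_unitl: "(zr \<otimes> Im 1) \<Zsemi> ad = Im 1"
  by transfer (use axE.add_unitl in \<open>auto intro: eqE.ax\<close>)
lemma add_unitr: "(Im 1 \<otimes> zr) \<Zsemi> ad = Im 1"
  by transfer (use axE.add_unitr in \<open>auto intro: eqE.ax\<close>)
lemma and_comm: "Sy 1 1 \<Zsemi> an = an"
  by transfer (use axE.and_comm in \<open>auto intro: eqE.ax\<close>)
lemma and_assoc: "(an \<otimes> Im 1) \<Zsemi> an = (Im 1 \<otimes> an) \<Zsemi> an"
  by transfer (use axE.and_assoc in \<open>auto intro: eqE.ax\<close>)
lemma and_unitl: "(on \<otimes> Im 1) \<Zsemi> an = Im 1"
  by transfer (use axE.and_unitl in \<open>auto intro: eqE.ax\<close>)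
lemma and_unitr: "(Im 1 \<otimes> on) \<Zsemi> an = Im 1"
  by transfer (use axE.and_unitr in \<open>auto intro: eqE.ax\<close>)
lemma copy_and: "cp \<Zsemi> an = Im 1"
  by transfer (use axE.copy_and in \<open>auto intro: eqE.ax\<close>)
lemma copy_add: "cp \<Zsemi> ad = disc \<Zsemi> zr"
  by transfer (use axE.copy_add in \<open>auto intro: eqE.ax\<close>)
lemma distrib: "(Im 1 \<otimes> ad) \<Zsemi> an = (((cp \<otimes> Im 2) \<Zsemi> ((Im 1 \<otimes> Sy 1 1) \<otimes> Im 1)) \<Zsemi> (an \<otimes> an)) \<Zsemi> ad"
  by transfer (use axE.distrib in \<open>auto intro: eqE.ax\<close>)

declare One_nat_def[simp del]
lemma one_plus_Suc[simp]: "(1::nat) + n = Suc n" by simp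

lemma ich2: "cd f = dm g \<Longrightarrow> cd h = dm k \<Longrightarrow> cd g + cd k = dm r \<Longrightarrow>
  (f \<otimes> h) \<Zsemi> (g \<otimes> k) \<Zsemi> r = ((f \<Zsemi> g) \<otimes> (h \<Zsemi> k)) \<Zsemi> r"
  by (simp add: Sq_assoc[symmetric] ich)

lemma Im_add: "Im (a + b) = Im a \<otimes> Im b" by (simp add: Pr_Im)

lemma CR:
  assumes "dm X1 = 1" "dm X2 = 1" "dm A = m" "dm B = m"
  shows "cpn (Suc m) \<Zsemi> ((X1 \<otimes> A) \<otimes> (X2 \<otimes> B)) =
    ((cp \<Zsemi> (X1 \<otimes> X2)) \<otimes> (cpn m \<Zsemi> (A \<otimes> B))) \<Zsemi> (Im (cd X1) \<otimes> Sy (cd X2) (cd A) \<otimes> Im (cd B))"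
proof -
  have mid: "(Im 1 \<otimes> Sy 1 m \<otimes> Im m) \<Zsemi> (X1 \<otimes> A \<otimes> X2 \<otimes> B) =
      (X1 \<otimes> X2 \<otimes> A \<otimes> B) \<Zsemi> (Im (cd X1) \<otimes> Sy (cd X2) (cd A) \<otimes> Im (cd B))"
  proof -
    have "(Im 1 \<otimes> Sy 1 m \<otimes> Im m) \<Zsemi> (X1 \<otimes> A \<otimes> X2 \<otimes> B) =
       (Im 1 \<otimes> Sy 1 m \<otimes> Im m) \<Zsemi> (X1 \<otimes> (A \<otimes> X2) \<otimes> B)" by (simp add: Pr_assoc)
    also have "\<dots> = X1 \<otimes> (Sy 1 m \<Zsemi> (A \<otimes> X2)) \<otimes> B"
      using assms by (simp add: ich Sq_idl)
    also have "Sy 1 m \<Zsemi> (A \<otimes> X2) = (X2 \<otimes> A) \<Zsemi> Sy (cd X2) (cd A)"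
      using sym_nat[of X2 A] assms by simp
    also have "X1 \<otimes> ((X2 \<otimes> A) \<Zsemi> Sy (cd X2) (cd A)) \<otimes> B =
       (X1 \<Zsemi> Im (cd X1)) \<otimes> ((X2 \<otimes> A) \<Zsemi> Sy (cd X2) (cd A)) \<otimes> (B \<Zsemi> Im (cd B))"
      by (simp add: Sq_idr)
    also have "\<dots> = (X1 \<otimes> (X2 \<otimes> A) \<otimes> B) \<Zsemi> (Im (cd X1) \<otimes> Sy (cd X2) (cd A) \<otimes> Im (cd B))"
      by (simp add: ich)
    also have "\<dots> = (X1 \<otimes> X2 \<otimes> A \<otimes> B) \<Zsemi> (Im (cd X1) \<otimes> Sy (cd X2) (cd A) \<otimes> Im (cd B))"
      by (simp add: Pr_assoc)
    finally show ?thesis .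
  qed
  have "cpn (Suc m) \<Zsemi> ((X1 \<otimes> A) \<otimes> (X2 \<otimes> B)) =
     (cp \<otimes> cpn m) \<Zsemi> ((Im 1 \<otimes> Sy 1 m \<otimes> Im m) \<Zsemi> (X1 \<otimes> A \<otimes> X2 \<otimes> B))"
    using assms by (simp add: cpn_Suc Sq_assoc Pr_assoc)
  also have "\<dots> = (cp \<otimes> cpn m) \<Zsemi> ((X1 \<otimes> X2 \<otimes> A \<otimes> B) \<Zsemi> (Im (cd X1) \<otimes> Sy (cd X2) (cd A) \<otimes> Im (cd B)))"
    by (simp only: mid)
  also have "\<dots> = ((cp \<otimes> cpn m) \<Zsemi> ((X1 \<otimes> X2) \<otimes> (A \<otimes> B))) \<Zsemi> (Im (cd X1) \<otimes> Sy (cd X2) (cd A) \<otimes> Im (cd B))"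
    using assms by (simp add: Sq_assoc Pr_assoc)
  also have "(cp \<otimes> cpn m) \<Zsemi> ((X1 \<otimes> X2) \<otimes> (A \<otimes> B)) = (cp \<Zsemi> (X1 \<otimes> X2)) \<otimes> (cpn m \<Zsemi> (A \<otimes> B))"
    using assms by (simp add: ich)
  finally show ?thesis .
qed


lemma dcn1: "dcn 1 = disc" by (simp add: One_nat_def dcn_Suc dcn_0 Pr_unitr)
lemma dcn2: "dcn 2 = disc \<otimes> disc" by (simp add: numeral_2_eq_2 dcn_Suc dcn_0 Pr_unitr)
lemma dcn_add: "dcn (a + b) = dcn a \<otimes> dcn b"
  by (induction a) (simp_all add: dcn_0 dcn_Suc Pr_unitl Pr_assoc)

lemma copy_unit_r: "cp \<Zsemi> (Im 1 \<otimes> disc) = Im 1"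
proof -
  have "cp \<Zsemi> (Im 1 \<otimes> disc) = (cp \<Zsemi> Sy 1 1) \<Zsemi> (Im 1 \<otimes> disc)" by (simp add: copy_comm)
  also have "\<dots> = cp \<Zsemi> (Sy 1 1 \<Zsemi> (Im 1 \<otimes> disc))" by (simp add: Sq_assoc)
  also have "Sy 1 1 \<Zsemi> (Im 1 \<otimes> disc) = (disc \<otimes> Im 1) \<Zsemi> Sy 0 1"
    using sym_nat[of disc "Im 1"] by simp
  also have "\<dots> = disc \<otimes> Im 1" by (simp add: sym_unitl Sq_idr)
  finally show ?thesis by (simp add: copy_unit)
qed

lemma copy_disc2: "cp \<Zsemi> (disc \<otimes> disc) = disc"
  using discard_nat[of cp] by (simp add: dcn2 dcn1)

lemma U_l: "cpn n \<Zsemi> (Im n \<otimes> dcn n) = Im n"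
proof (induction n)
  case 0 then show ?case by (simp add: cpn_0 dcn_0 Pr_unitl Sq_idl)
next
  case (Suc n)
  have "cpn (Suc n) \<Zsemi> (Im (Suc n) \<otimes> dcn (Suc n)) = cpn (Suc n) \<Zsemi> ((Im 1 \<otimes> Im n) \<otimes> (disc \<otimes> dcn n))"
    by (simp add: dcn_Suc Pr_Im)
  also have "\<dots> = ((cp \<Zsemi> (Im 1 \<otimes> disc)) \<otimes> (cpn n \<Zsemi> (Im n \<otimes> dcn n))) \<Zsemi> (Im 1 \<otimes> Sy 0 n \<otimes> Im 0)"
    by (subst CR) simp_all
  also have "\<dots> = Im (Suc n)"
    by (simp add: copy_unit_r Suc sym_unitl Pr_Im Sq_idl)
  finally show ?case .
qed

lemma U_r: "cpn n \<Zsemi> (dcn n \<otimes> Im n) = Im n"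
proof (induction n)
  case 0 then show ?case by (simp add: cpn_0 dcn_0 Pr_unitl Sq_idl)
next
  case (Suc n)
  have "cpn (Suc n) \<Zsemi> (dcn (Suc n) \<otimes> Im (Suc n)) = cpn (Suc n) \<Zsemi> ((disc \<otimes> dcn n) \<otimes> (Im 1 \<otimes> Im n))"
    by (simp add: dcn_Suc Pr_Im)
  also have "\<dots> = ((cp \<Zsemi> (disc \<otimes> Im 1)) \<otimes> (cpn n \<Zsemi> (dcn n \<otimes> Im n))) \<Zsemi> (Im 0 \<otimes> Sy 1 0 \<otimes> Im n)"
    by (subst CR) simp_all
  also have "\<dots> = Im (Suc n)"
    by (simp add: copy_unit Suc sym_unitr Pr_Im Sq_idl)
  finally show ?case .
qed

lemma U: "dm h = n \<Longrightarrow> cpn n \<Zsemi> (h \<otimes> dcn n) = h"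
proof -
  assume h: "dm h = n"
  have "h \<otimes> dcn n = (Im n \<Zsemi> h) \<otimes> (dcn n \<Zsemi> Im 0)" using h by (simp add: Sq_idl Sq_idr)
  also have "\<dots> = (Im n \<otimes> dcn n) \<Zsemi> (h \<otimes> Im 0)" using h by (simp add: ich)
  finally have "cpn n \<Zsemi> (h \<otimes> dcn n) = (cpn n \<Zsemi> (Im n \<otimes> dcn n)) \<Zsemi> (h \<otimes> Im 0)"
    using h by (simp add: Sq_assoc)
  then show ?thesis using h by (simp add: U_l Pr_unitr Sq_idl)
qed

lemma U': "dm h = n \<Longrightarrow> cpn n \<Zsemi> (dcn n \<otimes> h) = h"
proof -
  assume h: "dm h = n"
  have "dcn n \<otimes> h = (dcn n \<Zsemi> Im 0) \<otimes> (Im n \<Zsemi> h)" using h by (simp add: Sq_idl Sq_idr)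
  also have "\<dots> = (dcn n \<otimes> Im n) \<Zsemi> (Im 0 \<otimes> h)" using h by (simp add: ich)
  finally have "cpn n \<Zsemi> (dcn n \<otimes> h) = (cpn n \<Zsemi> (dcn n \<otimes> Im n)) \<Zsemi> (Im 0 \<otimes> h)"
    using h by (simp add: Sq_assoc)
  then show ?thesis using h by (simp add: U_r Pr_unitl Sq_idl)
qed

lemma T1': "dm A = m \<Longrightarrow> dm B = m \<Longrightarrow>
   cpn (Suc m) \<Zsemi> ((disc \<otimes> A) \<otimes> (disc \<otimes> B)) = disc \<otimes> (cpn m \<Zsemi> (A \<otimes> B))"
  by (subst CR) (simp_all add: copy_disc2 sym_unitl Pr_Im Sq_idr Pr_unitl)

lemma T2: "cpn (Suc m) \<Zsemi> ((Im 1 \<otimes> dcn m) \<otimes> (disc \<otimes> Im m)) = Im (Suc m)"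
  by (subst CR) (simp_all add: copy_unit_r U_r sym_unitl Pr_Im Sq_idr Pr_unitl)

fun Tup :: "nat \<Rightarrow> mor list \<Rightarrow> mor" where
  "Tup n [] = dcn n"
| "Tup n (h # hs) = cpn n \<Zsemi> (h \<otimes> Tup n hs)"

lemma dm_Tup[simp]: "\<forall>h\<in>set hs. dm h = n \<Longrightarrow> dm (Tup n hs) = n"
  by (induction hs) simp_all

lemma cd_Tup[simp]: "\<forall>h\<in>set hs. dm h = n \<Longrightarrow> cd (Tup n hs) = sum_list (map cd hs)"
  by (induction hs) simp_all

lemma T1: "\<forall>h\<in>set hs. dm h = m \<Longrightarrow> Tup (Suc m) (map (\<lambda>h. disc \<otimes> h) hs) = disc \<otimes> Tup m hs"
proof (induction hs)
  case Nil then show ?case by (simp add: dcn_Suc)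
next
  case (Cons h hs)
  then show ?case by (simp add: T1')
qed

definition sel :: "nat \<Rightarrow> nat \<Rightarrow> mor" where
  "sel n i = dcn i \<otimes> Im 1 \<otimes> dcn (n - Suc i)"

lemma dm_sel[simp]: "i < n \<Longrightarrow> dm (sel n i) = n" by (simp add: sel_def)
lemma cd_sel[simp]: "cd (sel n i) = 1" by (simp add: sel_def)

lemma sel_Suc: "i < m \<Longrightarrow> sel (Suc m) (Suc i) = disc \<otimes> sel m i"
  by (simp add: sel_def dcn_Suc Pr_assoc)

lemma sel_0: "sel (Suc m) 0 = Im 1 \<otimes> dcn m"
  by (simp add: sel_def dcn_0 Pr_unitl)

lemma Wid: "Im m = Tup m (map (sel m) [0..<m])"
proof (induction m)
  case 0 then show ?case by (simp add: dcn_0)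
next
  case (Suc m)
  have "map (sel (Suc m)) [0..<Suc m] = sel (Suc m) 0 # map (\<lambda>h. disc \<otimes> h) (map (sel m) [0..<m])"
    by (simp add: upt_conv_Cons map_Suc_upt[symmetric] sel_Suc del: upt_Suc)
  also have "sel (Suc m) 0 = Im 1 \<otimes> dcn m" by (rule sel_0)
  finally have e: "map (sel (Suc m)) [0..<Suc m] = (Im 1 \<otimes> dcn m) # map (\<lambda>h. disc \<otimes> h) (map (sel m) [0..<m])" .
  have t1: "Tup (Suc m) (map (\<lambda>h. disc \<otimes> h) (map (sel m) [0..<m])) = disc \<otimes> Tup m (map (sel m) [0..<m])"
    by (rule T1) auto
  have "Tup (Suc m) (map (sel (Suc m)) [0..<Suc m]) = cpn (Suc m) \<Zsemi> ((Im 1 \<otimes> dcn m) \<otimes> (disc \<otimes> Im m))"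
    unfolding e Tup.simps t1 Suc[symmetric] ..
  then show ?case by (simp add: T2)
qed

lemma Tup_nat: "\<forall>h\<in>set hs. dm h = m \<Longrightarrow> dm p = n \<Longrightarrow> cd p = m \<Longrightarrow>
   p \<Zsemi> Tup m hs = Tup n (map (\<lambda>h. p \<Zsemi> h) hs)"
proof (induction hs)
  case Nil then show ?case using discard_nat[of p] by simp
next
  case (Cons h hs)
  have "p \<Zsemi> Tup m (h # hs) = (p \<Zsemi> cpn m) \<Zsemi> (h \<otimes> Tup m hs)"
    using Cons.prems by (simp add: Sq_assoc)
  also have "\<dots> = (cpn n \<Zsemi> (p \<otimes> p)) \<Zsemi> (h \<otimes> Tup m hs)"
    using copy_nat[of p] Cons.prems by simp
  also have "\<dots> = cpn n \<Zsemi> ((p \<Zsemi> h) \<otimes> (p \<Zsemi> Tup m hs))"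
    using Cons.prems by (simp add: Sq_assoc ich)
  finally show ?case using Cons by simp
qed

lemma SP: "dm p = n \<Longrightarrow> cd p = m \<Longrightarrow> p = Tup n (map (\<lambda>k. p \<Zsemi> sel m k) [0..<m])"
proof -
  assume a: "dm p = n" "cd p = m"
  have "p = p \<Zsemi> Im m" using a by (simp add: Sq_idr)
  also have "\<dots> = p \<Zsemi> Tup m (map (sel m) [0..<m])" using Wid by simp
  also have "\<dots> = Tup n (map (\<lambda>h. p \<Zsemi> h) (map (sel m) [0..<m]))"
    by (rule Tup_nat) (use a in auto)
  finally show ?thesis by (simp add: comp_def)
qed

datatype bt = V nat | Zt | Ot | Pl bt bt | Ml bt bt

fun bnd :: "nat \<Rightarrow> bt \<Rightarrow> bool" where
  "bnd n (V i) = (i < n)"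
| "bnd n Zt = True"
| "bnd n Ot = True"
| "bnd n (Pl s t) = (bnd n s \<and> bnd n t)"
| "bnd n (Ml s t) = (bnd n s \<and> bnd n t)"

fun den :: "nat \<Rightarrow> bt \<Rightarrow> mor" where
  "den n (V i) = sel n i"
| "den n Zt = dcn n \<Zsemi> zr"
| "den n Ot = dcn n \<Zsemi> on"
| "den n (Pl s t) = cpn n \<Zsemi> (den n s \<otimes> den n t) \<Zsemi> ad"
| "den n (Ml s t) = cpn n \<Zsemi> (den n s \<otimes> den n t) \<Zsemi> an"

lemma den_ty: "bnd n t \<Longrightarrow> dm (den n t) = n \<and> cd (den n t) = 1"
  by (induction t) (simp_all add: One_nat_def)

lemma dm_den[simp]: "bnd n t \<Longrightarrow> dm (den n t) = n" using den_ty by blast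
lemma cd_den[simp]: "bnd n t \<Longrightarrow> cd (den n t) = 1" using den_ty by blast

fun subst :: "(nat \<Rightarrow> bt) \<Rightarrow> bt \<Rightarrow> bt" where
  "subst \<sigma> (V i) = \<sigma> i"
| "subst \<sigma> Zt = Zt"
| "subst \<sigma> Ot = Ot"
| "subst \<sigma> (Pl s t) = Pl (subst \<sigma> s) (subst \<sigma> t)"
| "subst \<sigma> (Ml s t) = Ml (subst \<sigma> s) (subst \<sigma> t)"

lemma bnd_subst: "bnd k t \<Longrightarrow> (\<forall>j<k. bnd n (\<sigma> j)) \<Longrightarrow> bnd n (subst \<sigma> t)"
  by (induction t) auto

lemma Sub:
  assumes "dm F = n" "cd F = k" "\<forall>j<k. F \<Zsemi> sel k j = den n (\<sigma> j)" "\<forall>j<k. bnd n (\<sigma> j)"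
  shows "bnd k t \<Longrightarrow> F \<Zsemi> den k t = den n (subst \<sigma> t)"
proof (induction t)
  case (V i) then show ?case using assms by simp
next
  case Zt
  then show ?case using assms discard_nat[of F] by (simp add: Sq_assoc[symmetric])
next
  case Ot
  then show ?case using assms discard_nat[of F] by (simp add: Sq_assoc[symmetric])
next
  case (Pl s t)
  have "F \<Zsemi> den k (Pl s t) = (F \<Zsemi> cpn k) \<Zsemi> (den k s \<otimes> den k t) \<Zsemi> ad"
    using Pl assms by (simp add: Sq_assoc)
  also have "\<dots> = cpn n \<Zsemi> ((F \<Zsemi> den k s) \<otimes> (F \<Zsemi> den k t)) \<Zsemi> ad"
    using Pl assms copy_nat[of F] by (simp add: Sq_assoc ich ich2)
  finally show ?case using Pl by simp
next
  case (Ml s t)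
  have "F \<Zsemi> den k (Ml s t) = (F \<Zsemi> cpn k) \<Zsemi> (den k s \<otimes> den k t) \<Zsemi> an"
    using Ml assms by (simp add: Sq_assoc)
  also have "\<dots> = cpn n \<Zsemi> ((F \<Zsemi> den k s) \<otimes> (F \<Zsemi> den k t)) \<Zsemi> an"
    using Ml assms copy_nat[of F] by (simp add: Sq_assoc ich ich2)
  finally show ?case using Ml by simp
qed

lemma subst_V: "subst V t = t" by (induction t) simp_all

definition shift :: "nat \<Rightarrow> bt \<Rightarrow> bt" where
  "shift j t = subst (\<lambda>i. V (j + i)) t"

lemma selWL: "i < n \<Longrightarrow> sel n i \<otimes> dcn j = sel (n + j) i"
proof -
  assume "i < n"
  then have "n + j - Suc i = (n - Suc i) + j" by simp
  then show ?thesis by (simp add: sel_def dcn_add Pr_assoc)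
qed

lemma selWR: "dcn j \<otimes> sel n i = sel (j + n) (j + i)"
  by (simp add: sel_def dcn_add Pr_assoc)

lemma WL: "bnd n t \<Longrightarrow> den n t \<otimes> dcn j = den (n + j) t"
proof -
  assume b: "bnd n t"
  have "den n t \<otimes> dcn j = (Im n \<otimes> dcn j) \<Zsemi> (den n t \<otimes> Im 0)"
    using b by (simp add: ich Sq_idl Sq_idr)
  also have "\<dots> = (Im n \<otimes> dcn j) \<Zsemi> den n t" by (simp add: Pr_unitr)
  also have "\<dots> = den (n + j) (subst V t)"
  proof (rule Sub[OF _ _ _ _ b])
    show "\<forall>ja<n. (Im n \<otimes> dcn j) \<Zsemi> sel n ja = den (n + j) (V ja)"
    proof (intro allI impI)
      fix i assume i: "i < n"
      have "(Im n \<otimes> dcn j) \<Zsemi> sel n i = (Im n \<otimes> dcn j) \<Zsemi> (sel n i \<otimes> Im 0)" by (simp add: Pr_unitr)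
      also have "\<dots> = sel n i \<otimes> dcn j" using i by (simp add: ich Sq_idl Sq_idr)
      finally show "(Im n \<otimes> dcn j) \<Zsemi> sel n i = den (n + j) (V i)" using i by (simp add: selWL)
    qed
  qed simp_all
  finally show ?thesis by (simp add: subst_V)
qed

lemma WR: "bnd n t \<Longrightarrow> dcn j \<otimes> den n t = den (j + n) (shift j t)"
proof -
  assume b: "bnd n t"
  have "dcn j \<otimes> den n t = (dcn j \<otimes> Im n) \<Zsemi> (Im 0 \<otimes> den n t)"
    using b by (simp add: ich Sq_idl Sq_idr)
  also have "\<dots> = (dcn j \<otimes> Im n) \<Zsemi> den n t" by (simp add: Pr_unitl)
  also have "\<dots> = den (j + n) (shift j t)"
    unfolding shift_def
  proof (rule Sub[OF _ _ _ _ b])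
    show "\<forall>ja<n. (dcn j \<otimes> Im n) \<Zsemi> sel n ja = den (j + n) (V (j + ja))"
    proof (intro allI impI)
      fix i assume i: "i < n"
      have "(dcn j \<otimes> Im n) \<Zsemi> sel n i = (dcn j \<otimes> Im n) \<Zsemi> (Im 0 \<otimes> sel n i)" by (simp add: Pr_unitl)
      also have "\<dots> = dcn j \<otimes> sel n i" using i by (simp add: ich Sq_idl Sq_idr)
      finally show "(dcn j \<otimes> Im n) \<Zsemi> sel n i = den (j + n) (V (j + i))" using i by (simp add: selWR)
    qed
  qed simp_all
  finally show ?thesis .
qed


fun tm :: "circ \<Rightarrow> nat \<Rightarrow> bt" where
  "tm (CGen Discard) k = Zt"
| "tm (CGen Copy) k = V 0"
| "tm (CGen Zero) k = Zt"
| "tm (CGen One) k = Ot"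
| "tm (CGen Add) k = Pl (V 0) (V 1)"
| "tm (CGen And) k = Ml (V 0) (V 1)"
| "tm (CId n) k = V k"
| "tm (CSym m n) k = (if k < n then V (m + k) else V (k - n))"
| "tm (CSeq f g) k = subst (tm f) (tm g k)"
| "tm (CPar f g) k = (if k < ccod f then tm f k else shift (cdom f) (tm g (k - ccod f)))"

lemma bnd_shift: "bnd n t \<Longrightarrow> bnd (j + n) (shift j t)"
  unfolding shift_def by (induction t) auto

lemma bnd_mono: "bnd n t \<Longrightarrow> n \<le> m \<Longrightarrow> bnd m t"
  by (induction t) auto

lemma tm_bnd: "wf c \<Longrightarrow> k < ccod c \<Longrightarrow> bnd (cdom c) (tm c k)"
proof (induction c arbitrary: k)
  case (CGen g) then show ?case by (cases g) auto
next
  case (CSeq f g) then show ?case by (auto intro!: bnd_subst)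
next
  case (CPar f g)
  show ?case
  proof (cases "k < ccod f")
    case True then show ?thesis using CPar bnd_mono by force
  next
    case False
    then have "bnd (cdom g) (tm g (k - ccod f))" using CPar by simp
    then have "bnd (cdom f + cdom g) (shift (cdom f) (tm g (k - ccod f)))" by (rule bnd_shift)
    then show ?thesis using False by simp
  qed
qed auto

lemma Im2: "cpn 2 \<Zsemi> (sel 2 0 \<otimes> sel 2 1) = Im 2"
proof -
  have u: "[0..<2] = [0::nat, 1]" by (simp add: upt_rec One_nat_def)
  have "Im 2 = Tup 2 [sel 2 0, sel 2 1]" using Wid[of 2] unfolding u by simp
  also have "\<dots> = cpn 2 \<Zsemi> (sel 2 0 \<otimes> sel 2 1)" by (simp add: U)
  finally show ?thesis by simp
qed

lemma sel10: "sel 1 0 = Im 1" by (simp add: sel_def dcn_0 Pr_unitl Pr_unitr)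

lemma L1: "wf c \<Longrightarrow> k < ccod c \<Longrightarrow> evc c \<Zsemi> sel (ccod c) k = den (cdom c) (tm c k)"
proof (induction c arbitrary: k)
  case (CGen g)
  show ?case
  proof (cases g)
    case Copy
    then have k: "k = 0 \<or> k = 1" using CGen by auto
    have s20: "sel 2 0 = Im 1 \<otimes> disc" by (simp add: sel_def dcn_0 dcn1 Pr_unitl Pr_unitr)
    have s21: "sel 2 1 = disc \<otimes> Im 1" by (simp add: sel_def dcn_0 dcn1 Pr_unitl Pr_unitr)
    show ?thesis using k Copy by (auto simp: evc_Gen s20 s21 copy_unit copy_unit_r sel10)
  next
    case Zero
    then show ?thesis using CGen by (simp add: evc_Gen sel10 Sq_idr dcn_0 Sq_idl)
  next
    case One
    then show ?thesis using CGen by (simp add: evc_Gen sel10 Sq_idr dcn_0 Sq_idl)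
  next
    case Add
    then show ?thesis using CGen
      by (simp add: evc_Gen sel10 Sq_idr Sq_assoc[symmetric] Im2 Sq_idl)
  next
    case And
    then show ?thesis using CGen
      by (simp add: evc_Gen sel10 Sq_idr Sq_assoc[symmetric] Im2 Sq_idl)
  qed (use CGen in auto)
next
  case (CId n) then show ?case by (simp add: evc_Id Sq_idl)
next
  case (CSym m n)
  show ?case
  proof (cases "k < n")
    case True
    have "Sy m n \<Zsemi> sel (n + m) k = Sy m n \<Zsemi> (sel n k \<otimes> dcn m)" using True by (simp add: selWL)
    also have "\<dots> = (dcn m \<otimes> sel n k) \<Zsemi> Sy 0 1"
      using sym_nat[of "dcn m" "sel n k"] True by simp
    also have "\<dots> = sel (m + n) (m + k)" using True by (simp add: sym_unitl Sq_idr selWR)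
    finally show ?thesis using True by (simp add: evc_Sym)
  next
    case False
    then obtain i where i: "k = n + i" "i < m" using CSym by (metis add_diff_inverse_nat ccod.simps(3) nat_add_left_cancel_less)
    have "Sy m n \<Zsemi> sel (n + m) k = Sy m n \<Zsemi> (dcn n \<otimes> sel m i)" using i by (simp add: selWR)
    also have "\<dots> = (sel m i \<otimes> dcn n) \<Zsemi> Sy 1 0"
      using sym_nat[of "sel m i" "dcn n"] i by simp
    also have "\<dots> = sel (m + n) i" using i by (simp add: sym_unitr Sq_idr selWL)
    finally show ?thesis using i by (simp add: evc_Sym)
  qed
next
  case (CSeq f g)
  have wf: "wf f" "wf g" "ccod f = cdom g" using CSeq by auto
  have "evc (CSeq f g) \<Zsemi> sel (ccod (CSeq f g)) k = evc f \<Zsemi> (evc g \<Zsemi> sel (ccod g) k)"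
    using wf CSeq.prems by (simp add: evc_Seq Sq_assoc dm_evc cd_evc)
  also have "\<dots> = evc f \<Zsemi> den (cdom g) (tm g k)" using CSeq wf by simp
  also have "\<dots> = den (cdom f) (subst (tm f) (tm g k))"
  proof (rule Sub)
    show "\<forall>j<cdom g. evc f \<Zsemi> sel (cdom g) j = den (cdom f) (tm f j)" using CSeq.IH(1) wf by simp
    show "\<forall>j<cdom g. bnd (cdom f) (tm f j)" using tm_bnd wf by simp
    show "bnd (cdom g) (tm g k)" using tm_bnd wf CSeq.prems by fastforce
  qed (use wf in \<open>simp_all add: dm_evc cd_evc\<close>)
  finally show ?case by simp
next
  case (CPar f g)
  have wf: "wf f" "wf g" using CPar by auto
  show ?case
  proof (cases "k < ccod f")
    case True
    have "evc (CPar f g) \<Zsemi> sel (ccod (CPar f g)) k = (evc f \<otimes> evc g) \<Zsemi> (sel (ccod f) k \<otimes> dcn (ccod g))"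
      using wf True by (simp add: evc_Par selWL)
    also have "\<dots> = den (cdom f) (tm f k) \<otimes> dcn (cdom g)"
      using wf True CPar.IH(1) discard_nat[of "evc g"] by (simp add: ich dm_evc cd_evc)
    also have "\<dots> = den (cdom f + cdom g) (tm f k)" using WL tm_bnd wf True by simp
    finally show ?thesis using True by simp
  next
    case False
    then obtain i where i: "k = ccod f + i" "i < ccod g" using CPar.prems
      by (metis add_diff_inverse_nat ccod.simps(5) nat_add_left_cancel_less)
    have "evc (CPar f g) \<Zsemi> sel (ccod (CPar f g)) k = (evc f \<otimes> evc g) \<Zsemi> (dcn (ccod f) \<otimes> sel (ccod g) i)"
      using wf i by (simp add: evc_Par selWR)
    also have "\<dots> = dcn (cdom f) \<otimes> den (cdom g) (tm g i)"
      using wf i CPar.IH(2) discard_nat[of "evc f"] by (simp add: ich dm_evc cd_evc)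
    also have "\<dots> = den (cdom f + cdom g) (shift (cdom f) (tm g i))" using WR tm_bnd wf i by simp
    finally show ?thesis using i by simp
  qed
qed

fun evalt :: "bool list \<Rightarrow> bt \<Rightarrow> bool" where
  "evalt xs (V i) = xs ! i"
| "evalt xs Zt = False"
| "evalt xs Ot = True"
| "evalt xs (Pl s t) = (evalt xs s \<noteq> evalt xs t)"
| "evalt xs (Ml s t) = (evalt xs s \<and> evalt xs t)"

lemma evalt_subst: "bnd k t \<Longrightarrow> evalt xs (subst \<sigma> t) = evalt (map (\<lambda>j. evalt xs (\<sigma> j)) [0..<k]) t"
  by (induction t) auto

lemma evalt_take: "bnd n t \<Longrightarrow> n \<le> length xs \<Longrightarrow> evalt (take n xs) t = evalt xs t"
  by (induction t) auto

lemma evalt_shift: "bnd n t \<Longrightarrow> j + n \<le> length xs \<Longrightarrow> evalt xs (shift j t) = evalt (drop j xs) t"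
  unfolding shift_def by (induction t) auto

lemma SP_den: "wf p \<Longrightarrow> evc p = Tup (cdom p) (map (\<lambda>k. den (cdom p) (tm p k)) [0..<ccod p])"
proof -
  assume w: "wf p"
  have "evc p = Tup (cdom p) (map (\<lambda>k. evc p \<Zsemi> sel (ccod p) k) [0..<ccod p])"
    using SP[of "evc p" "cdom p" "ccod p"] w by (simp add: dm_evc cd_evc)
  also have "\<dots> = Tup (cdom p) (map (\<lambda>k. den (cdom p) (tm p k)) [0..<ccod p])"
    by (intro arg_cong[where f="Tup _"] map_cong) (simp_all add: L1 w)
  finally show ?thesis .
qed

lemma tm_sem: "wf c \<Longrightarrow> length xs = cdom c \<Longrightarrow> k < ccod c \<Longrightarrow> evalt xs (tm c k) = sem c xs ! k"
proof (induction c arbitrary: xs k)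
  case (CGen g) then show ?case by (cases g) (auto dest!: len1 len2 len2n simp: One_nat_def less_2_cases_iff)
next
  case (CSym m n) then show ?case by (auto simp: nth_append min_def)
next
  case (CSeq f g)
  have wf: "wf f" "wf g" "ccod f = cdom g" using CSeq.prems(1) by auto
  have b: "bnd (cdom g) (tm g k)" using tm_bnd[of g k] wf CSeq.prems by simp
  have m: "map (\<lambda>j. evalt xs (tm f j)) [0..<cdom g] = sem f xs"
    by (rule nth_equalityI) (use CSeq wf len_sem in auto)
  show ?case using evalt_subst[OF b, of xs "tm f"] m CSeq.IH(2)[of "sem f xs" k] wf CSeq.prems len_sem
    by simp
next
  case (CPar f g)
  have wf: "wf f" "wf g" using CPar.prems(1) by auto
  show ?case
  proof (cases "k < ccod f")
    case True
    have "evalt xs (tm f k) = evalt (take (cdom f) xs) (tm f k)"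
      using evalt_take[of "cdom f" "tm f k" xs] tm_bnd[of f k] wf True CPar.prems by simp
    also have "\<dots> = sem f (take (cdom f) xs) ! k" using CPar.IH(1) True CPar.prems by simp
    finally show ?thesis using True len_sem wf CPar.prems by (simp add: nth_append)
  next
    case False
    have "evalt xs (shift (cdom f) (tm g (k - ccod f))) = evalt (drop (cdom f) xs) (tm g (k - ccod f))"
      using evalt_shift[of "cdom g" "tm g (k - ccod f)" "cdom f" xs] tm_bnd[of g "k - ccod f"] wf False CPar.prems by simp
    also have "\<dots> = sem g (drop (cdom f) xs) ! (k - ccod f)" using CPar.IH(2) False CPar.prems by simp
    finally show ?thesis using False len_sem wf CPar.prems by (simp add: nth_append)
  qed
qed auto

lemma complete_tm:
  assumes "wf p" "wf q" "cdom p = n" "cdom q = n" "ccod p = m" "ccod q = m"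
    "\<forall>k<m. den n (tm p k) = den n (tm q k)"
  shows "evc p = evc q"
proof -
  have "Tup n (map (\<lambda>k. den n (tm p k)) [0..<m]) = Tup n (map (\<lambda>k. den n (tm q k)) [0..<m])"
    by (intro arg_cong[where f="Tup _"] map_cong) (simp_all add: assms(7))
  then show ?thesis using SP_den[OF assms(1)] SP_den[OF assms(2)] assms by simp
qed

fun iswire :: "circ \<Rightarrow> bool" where
  "iswire (CGen g) = (g = Copy \<or> g = Discard)"
| "iswire (CId n) = True"
| "iswire (CSym m n) = True"
| "iswire (CSeq f g) = (iswire f \<and> iswire g)"
| "iswire (CPar f g) = (iswire f \<and> iswire g)"

lemma wire_tm: "wf c \<Longrightarrow> iswire c \<Longrightarrow> k < ccod c \<Longrightarrow> \<exists>j<cdom c. tm c k = V j"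
proof (induction c arbitrary: k)
  case (CGen g) then show ?case by auto
next
  case (CSym m n) then show ?case by auto
next
  case (CSeq f g)
  have w: "wf f" "wf g" "ccod f = cdom g" "iswire f" "iswire g" using CSeq.prems by auto
  obtain j where j: "j < cdom g" "tm g k = V j" using CSeq.IH(2)[of k] w CSeq.prems by auto
  obtain i where i: "i < cdom f" "tm f j = V i" using CSeq.IH(1)[of j] w j by auto
  show ?case using i j by simp
next
  case (CPar f g)
  show ?case
  proof (cases "k < ccod f")
    case True
    obtain j where j: "j < cdom f" "tm f k = V j" using CPar.IH(1)[of k] CPar.prems True by auto
    then show ?thesis using True by simp
  next
    case False
    have "k - ccod f < ccod g" using False CPar.prems by simp
    then obtain j where j: "j < cdom g" "tm g (k - ccod f) = V j" using CPar.IH(2)[of "k - ccod f"] CPar.prems by auto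
    then show ?thesis using False by (auto simp: shift_def)
  qed
qed auto

lemma wire_coh:
  assumes "wf p" "wf q" "iswire p" "iswire q" "cdom p = cdom q" "ccod p = ccod q"
    "\<forall>xs. length xs = cdom p \<longrightarrow> sem p xs = sem q xs"
  shows "evc p = evc q"
proof (rule complete_tm[OF assms(1,2) HOL.refl assms(5)[symmetric] HOL.refl assms(6)[symmetric]])
  show "\<forall>k<ccod p. den (cdom p) (tm p k) = den (cdom p) (tm q k)"
  proof (intro allI impI)
    fix k assume k: "k < ccod p"
    obtain j1 where j1: "j1 < cdom p" "tm p k = V j1" using wire_tm[OF assms(1) assms(3) k] by blast
    have k2: "k < ccod q" using k assms(6) by simp
    obtain j2 where j2: "j2 < cdom p" "tm q k = V j2" using wire_tm[OF assms(2) assms(4) k2] assms(5) by auto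
    let ?xs = "(replicate (cdom p) False)[j1 := True]"
    have "evalt ?xs (tm p k) = evalt ?xs (tm q k)"
      using tm_sem[of p ?xs k] tm_sem[of q ?xs k] assms k by simp
    then have "j1 = j2" using j1 j2 by (cases "j1 = j2") auto
    then show "den (cdom p) (tm p k) = den (cdom p) (tm q k)" using j1 j2 by simp
  qed
qed

lemma iswire_copyn: "iswire (copyn n)" by (induction n) auto

lemma evc_copyn: "evc (copyn n) = cpn n" by (simp add: cpn_def)

lemma W_comm: "cpn n \<Zsemi> Sy n n = cpn n"
proof -
  have "evc (CSeq (copyn n) (CSym n n)) = evc (copyn n)"
    by (rule wire_coh) (use copyn_props[of n] iswire_copyn[of n] in \<open>auto simp: sem_copyn\<close>)
  then show ?thesis using copyn_props[of n] by (simp add: evc_Seq evc_Sym evc_copyn)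
qed

lemma W_assoc: "cpn n \<Zsemi> (cpn n \<otimes> Im n) = cpn n \<Zsemi> (Im n \<otimes> cpn n)"
proof -
  have "evc (CSeq (copyn n) (CPar (copyn n) (CId n))) = evc (CSeq (copyn n) (CPar (CId n) (copyn n)))"
    by (rule wire_coh) (use copyn_props[of n] iswire_copyn[of n] in \<open>auto simp: sem_copyn\<close>)
  then show ?thesis using copyn_props[of n] by (simp add: evc_Seq evc_Par evc_Id evc_copyn)
qed

lemma W_dist: "cpn n \<Zsemi> (Im n \<otimes> cpn n) \<Zsemi> (cpn n \<otimes> Im n \<otimes> Im n) \<Zsemi> (Im n \<otimes> Sy n n \<otimes> Im n)
  = cpn n \<Zsemi> (cpn n \<otimes> cpn n)"
proof -
  have "evc (CSeq (copyn n) (CSeq (CPar (CId n) (copyn n)) (CSeq (CPar (copyn n) (CPar (CId n) (CId n)))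
          (CPar (CId n) (CPar (CSym n n) (CId n))))))
      = evc (CSeq (copyn n) (CPar (copyn n) (copyn n)))"
    by (rule wire_coh) (use copyn_props[of n] iswire_copyn[of n] in \<open>auto simp: sem_copyn\<close>)
  then show ?thesis using copyn_props[of n] by (simp add: evc_Seq evc_Par evc_Id evc_Sym evc_copyn)
qed

lemma cpn1: "cpn 1 = cp"
  by (simp add: One_nat_def cpn_Suc cpn_0 sym_unitr Pr_Im Pr_unitr Sq_idr)


lemma pre2: "f \<Zsemi> g = f' \<Zsemi> g' \<Longrightarrow> cd g = dm r \<Longrightarrow> cd g' = dm r \<Longrightarrow> cd f = dm g \<Longrightarrow> cd f' = dm g' \<Longrightarrow>
  f \<Zsemi> g \<Zsemi> r = f' \<Zsemi> g' \<Zsemi> r"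
  by (simp add: Sq_assoc[symmetric])

definition bin :: "nat \<Rightarrow> mor \<Rightarrow> mor \<Rightarrow> mor \<Rightarrow> mor" where
  "bin n OP A B = cpn n \<Zsemi> (A \<otimes> B) \<Zsemi> OP"

definition ty1 :: "nat \<Rightarrow> mor \<Rightarrow> bool" where
  "ty1 n A \<longleftrightarrow> dm A = n \<and> cd A = 1"

lemma ty1D: "ty1 n A \<Longrightarrow> dm A = n" "ty1 n A \<Longrightarrow> cd A = 1" by (simp_all add: ty1_def)

lemma ty1_bin: "ty1 n A \<Longrightarrow> ty1 n B \<Longrightarrow> dm OP = 2 \<Longrightarrow> cd OP = 1 \<Longrightarrow> ty1 n (bin n OP A B)"
  by (simp add: bin_def ty1_def)

lemma bin_comm:
  assumes "ty1 n A" "ty1 n B" "dm OP = 2" "cd OP = 1" "Sy 1 1 \<Zsemi> OP = OP"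
  shows "bin n OP A B = bin n OP B A"
proof -
  have "bin n OP A B = cpn n \<Zsemi> (A \<otimes> B) \<Zsemi> (Sy 1 1 \<Zsemi> OP)" using assms by (simp add: ty1_def bin_def)
  also have "\<dots> = cpn n \<Zsemi> ((A \<otimes> B) \<Zsemi> Sy 1 1) \<Zsemi> OP" using assms by (simp add: ty1_def Sq_assoc)
  also have "(A \<otimes> B) \<Zsemi> Sy 1 1 = Sy n n \<Zsemi> (B \<otimes> A)" using sym_nat[of A B] assms by (simp add: ty1_def)
  also have "cpn n \<Zsemi> (Sy n n \<Zsemi> (B \<otimes> A)) \<Zsemi> OP = (cpn n \<Zsemi> Sy n n) \<Zsemi> (B \<otimes> A) \<Zsemi> OP"
    using assms by (simp add: ty1_def Sq_assoc)
  finally show ?thesis by (simp add: W_comm bin_def)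
qed

lemma bin_par_l:
  assumes "ty1 n A" "ty1 n B" "ty1 n C" "dm OP = 2" "cd OP = 1"
  shows "bin n OP A B \<otimes> C = (cpn n \<otimes> Im n) \<Zsemi> ((A \<otimes> B) \<otimes> C) \<Zsemi> (OP \<otimes> Im 1)"
proof -
  have "(cpn n \<otimes> Im n) \<Zsemi> ((A \<otimes> B) \<otimes> C) \<Zsemi> (OP \<otimes> Im 1) = (cpn n \<otimes> Im n) \<Zsemi> (((A \<otimes> B) \<Zsemi> OP) \<otimes> (C \<Zsemi> Im 1))"
    using assms by (simp add: ty1_def ich)
  also have "\<dots> = (cpn n \<Zsemi> (A \<otimes> B) \<Zsemi> OP) \<otimes> (Im n \<Zsemi> C \<Zsemi> Im 1)"
    using assms by (simp add: ty1_def ich)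
  finally show ?thesis using assms by (simp add: ty1_def bin_def Sq_idl Sq_idr)
qed

lemma bin_par_r:
  assumes "ty1 n A" "ty1 n B" "ty1 n C" "dm OP = 2" "cd OP = 1"
  shows "A \<otimes> bin n OP B C = (Im n \<otimes> cpn n) \<Zsemi> (A \<otimes> (B \<otimes> C)) \<Zsemi> (Im 1 \<otimes> OP)"
proof -
  have "(Im n \<otimes> cpn n) \<Zsemi> (A \<otimes> (B \<otimes> C)) \<Zsemi> (Im 1 \<otimes> OP) = (Im n \<otimes> cpn n) \<Zsemi> ((A \<Zsemi> Im 1) \<otimes> ((B \<otimes> C) \<Zsemi> OP))"
    using assms by (simp add: ty1_def ich)
  also have "\<dots> = (Im n \<Zsemi> A \<Zsemi> Im 1) \<otimes> (cpn n \<Zsemi> (B \<otimes> C) \<Zsemi> OP)"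
    using assms by (simp add: ty1_def ich)
  finally show ?thesis using assms by (simp add: ty1_def bin_def Sq_idl Sq_idr)
qed

lemma bin_assoc:
  assumes "ty1 n A" "ty1 n B" "ty1 n C" "dm OP = 2" "cd OP = 1"
    "(OP \<otimes> Im 1) \<Zsemi> OP = (Im 1 \<otimes> OP) \<Zsemi> OP"
  shows "bin n OP (bin n OP A B) C = bin n OP A (bin n OP B C)"
proof -
  have "bin n OP (bin n OP A B) C = cpn n \<Zsemi> (bin n OP A B \<otimes> C) \<Zsemi> OP"
    by (simp only: bin_def[of n OP "bin n OP A B" C])
  also have "\<dots> = cpn n \<Zsemi> ((cpn n \<otimes> Im n) \<Zsemi> ((A \<otimes> B) \<otimes> C) \<Zsemi> (OP \<otimes> Im 1)) \<Zsemi> OP"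
    by (simp only: bin_par_l[OF assms(1-5)])
  also have "\<dots> = cpn n \<Zsemi> (cpn n \<otimes> Im n) \<Zsemi> (A \<otimes> B \<otimes> C) \<Zsemi> ((OP \<otimes> Im 1) \<Zsemi> OP)"
    using assms by (simp add: ty1_def Sq_assoc Pr_assoc)
  also have "\<dots> = cpn n \<Zsemi> (Im n \<otimes> cpn n) \<Zsemi> (A \<otimes> B \<otimes> C) \<Zsemi> ((Im 1 \<otimes> OP) \<Zsemi> OP)"
    using assms by (simp only: assms(6)) (rule pre2[OF W_assoc], simp_all add: ty1_def)
  also have "\<dots> = cpn n \<Zsemi> ((Im n \<otimes> cpn n) \<Zsemi> (A \<otimes> (B \<otimes> C)) \<Zsemi> (Im 1 \<otimes> OP)) \<Zsemi> OP"
    using assms by (simp add: ty1_def Sq_assoc Pr_assoc)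
  also have "\<dots> = cpn n \<Zsemi> (A \<otimes> bin n OP B C) \<Zsemi> OP"
    by (simp only: bin_par_r[OF assms(1-5)])
  also have "\<dots> = bin n OP A (bin n OP B C)"
    by (simp only: bin_def[of n OP A "bin n OP B C"])
  finally show ?thesis .
qed

lemma bin_unit:
  assumes "ty1 n A" "dm OP = 2" "cd OP = 1" "dm U0 = 0" "cd U0 = 1" "(U0 \<otimes> Im 1) \<Zsemi> OP = Im 1"
  shows "bin n OP (dcn n \<Zsemi> U0) A = A"
proof -
  have "(dcn n \<Zsemi> U0) \<otimes> A = (dcn n \<otimes> Im n) \<Zsemi> (U0 \<otimes> A)"
    using assms by (simp add: ty1_def ich Sq_idl)
  also have "U0 \<otimes> A = A \<Zsemi> (U0 \<otimes> Im 1)"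
  proof -
    have "(Im 0 \<otimes> A) \<Zsemi> (U0 \<otimes> Im 1) = U0 \<otimes> A" using assms by (simp add: ty1_def ich Sq_idl Sq_idr)
    then show ?thesis by (simp add: Pr_unitl)
  qed
  finally have e: "(dcn n \<Zsemi> U0) \<otimes> A = (dcn n \<otimes> Im n) \<Zsemi> A \<Zsemi> (U0 \<otimes> Im 1)" .
  have "bin n OP (dcn n \<Zsemi> U0) A = (cpn n \<Zsemi> (dcn n \<otimes> Im n)) \<Zsemi> A \<Zsemi> ((U0 \<otimes> Im 1) \<Zsemi> OP)"
    unfolding bin_def e using assms by (simp add: ty1_def Sq_assoc)
  also have "\<dots> = A" using assms by (simp add: ty1_def U_r Sq_idl Sq_idr)
  finally show ?thesis .
qed

lemma ml_idem: "ty1 n A \<Longrightarrow> bin n an A A = A"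
proof -
  assume a: "ty1 n A"
  have "bin n an A A = (cpn n \<Zsemi> (A \<otimes> A)) \<Zsemi> an" using a by (simp add: ty1_def bin_def Sq_assoc)
  also have "\<dots> = (A \<Zsemi> cp) \<Zsemi> an" using copy_nat[of A] a by (simp add: ty1_def cpn1)
  also have "\<dots> = A" using a by (simp add: ty1_def Sq_assoc copy_and Sq_idr)
  finally show ?thesis .
qed

lemma pl_self: "ty1 n A \<Longrightarrow> bin n ad A A = dcn n \<Zsemi> zr"
proof -
  assume a: "ty1 n A"
  have "bin n ad A A = (cpn n \<Zsemi> (A \<otimes> A)) \<Zsemi> ad" using a by (simp add: ty1_def bin_def Sq_assoc)
  also have "\<dots> = (A \<Zsemi> cp) \<Zsemi> ad" using copy_nat[of A] a by (simp add: ty1_def cpn1)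
  also have "\<dots> = (A \<Zsemi> dcn 1) \<Zsemi> zr" using a by (simp add: ty1_def Sq_assoc copy_add dcn1)
  also have "\<dots> = dcn n \<Zsemi> zr" using discard_nat[of A] a by (simp add: ty1_def)
  finally show ?thesis .
qed

lemma DIST': "(Im 1 \<otimes> ad) \<Zsemi> an = (cp \<otimes> Im 1 \<otimes> Im 1) \<Zsemi> (Im 1 \<otimes> Sy 1 1 \<otimes> Im 1) \<Zsemi> (an \<otimes> an) \<Zsemi> ad"
  using distrib by (simp add: Sq_assoc Pr_assoc Pr_Im)

lemma bin_par2:
  assumes "ty1 n A" "ty1 n B" "ty1 n C" "ty1 n D" "dm OP = 2" "cd OP = 1"
  shows "bin n OP A B \<otimes> bin n OP C D = (cpn n \<otimes> cpn n) \<Zsemi> (A \<otimes> B \<otimes> C \<otimes> D) \<Zsemi> (OP \<otimes> OP)"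
proof -
  have "(cpn n \<otimes> cpn n) \<Zsemi> ((A \<otimes> B) \<otimes> (C \<otimes> D)) \<Zsemi> (OP \<otimes> OP) = (cpn n \<otimes> cpn n) \<Zsemi> (((A \<otimes> B) \<Zsemi> OP) \<otimes> ((C \<otimes> D) \<Zsemi> OP))"
    using assms by (simp add: ty1_def ich)
  also have "\<dots> = bin n OP A B \<otimes> bin n OP C D"
    using assms by (simp add: ty1_def ich bin_def)
  finally show ?thesis by (simp add: Pr_assoc)
qed

lemma distr:
  assumes "ty1 n A" "ty1 n B" "ty1 n C"
  shows "bin n an A (bin n ad B C) = bin n ad (bin n an A B) (bin n an A C)"
proof -
  have t: "dm A = n" "cd A = 1" "dm B = n" "cd B = 1" "dm C = n" "cd C = 1" using assms by (simp_all add: ty1_def)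
  have s4: "(A \<otimes> B \<otimes> C) \<Zsemi> (cp \<otimes> Im 1 \<otimes> Im 1) = (cpn n \<otimes> Im n \<otimes> Im n) \<Zsemi> (A \<otimes> A \<otimes> B \<otimes> C)"
  proof -
    have "(A \<otimes> B \<otimes> C) \<Zsemi> (cp \<otimes> Im 1 \<otimes> Im 1) = (A \<Zsemi> cp) \<otimes> B \<otimes> C" using t by (simp add: ich Sq_idr)
    also have "A \<Zsemi> cp = cpn n \<Zsemi> (A \<otimes> A)" using copy_nat[of A] t by (simp add: cpn1)
    also have "(cpn n \<Zsemi> (A \<otimes> A)) \<otimes> B \<otimes> C = (cpn n \<otimes> Im n \<otimes> Im n) \<Zsemi> ((A \<otimes> A) \<otimes> B \<otimes> C)"
      using t by (simp add: ich Sq_idl)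
    finally show ?thesis by (simp add: Pr_assoc)
  qed
  have s5: "(A \<otimes> A \<otimes> B \<otimes> C) \<Zsemi> (Im 1 \<otimes> Sy 1 1 \<otimes> Im 1) = (Im n \<otimes> Sy n n \<otimes> Im n) \<Zsemi> (A \<otimes> B \<otimes> A \<otimes> C)"
  proof -
    have "(A \<otimes> (A \<otimes> B) \<otimes> C) \<Zsemi> (Im 1 \<otimes> Sy 1 1 \<otimes> Im 1) = A \<otimes> ((A \<otimes> B) \<Zsemi> Sy 1 1) \<otimes> C"
      using t by (simp add: ich Sq_idr)
    also have "(A \<otimes> B) \<Zsemi> Sy 1 1 = Sy n n \<Zsemi> (B \<otimes> A)" using sym_nat[of A B] t by simp
    also have "A \<otimes> (Sy n n \<Zsemi> (B \<otimes> A)) \<otimes> C = (Im n \<otimes> Sy n n \<otimes> Im n) \<Zsemi> (A \<otimes> (B \<otimes> A) \<otimes> C)"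
      using t by (simp add: ich Sq_idl)
    finally show ?thesis by (simp add: Pr_assoc)
  qed
  have "bin n an A (bin n ad B C) = cpn n \<Zsemi> (A \<otimes> bin n ad B C) \<Zsemi> an" by (simp only: bin_def[of n an A])
  also have "\<dots> = cpn n \<Zsemi> ((Im n \<otimes> cpn n) \<Zsemi> (A \<otimes> B \<otimes> C) \<Zsemi> (Im 1 \<otimes> ad)) \<Zsemi> an"
    by (subst bin_par_r[OF assms(1-3)]) simp_all
  also have "\<dots> = cpn n \<Zsemi> (Im n \<otimes> cpn n) \<Zsemi> (A \<otimes> B \<otimes> C) \<Zsemi> ((Im 1 \<otimes> ad) \<Zsemi> an)"
    using t by (simp add: Sq_assoc)
  also have "\<dots> = cpn n \<Zsemi> (Im n \<otimes> cpn n) \<Zsemi> ((A \<otimes> B \<otimes> C) \<Zsemi> (cp \<otimes> Im 1 \<otimes> Im 1)) \<Zsemi> (Im 1 \<otimes> Sy 1 1 \<otimes> Im 1) \<Zsemi> (an \<otimes> an) \<Zsemi> ad"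
    using t by (simp add: DIST' Sq_assoc)
  also have "\<dots> = cpn n \<Zsemi> (Im n \<otimes> cpn n) \<Zsemi> (cpn n \<otimes> Im n \<otimes> Im n) \<Zsemi> ((A \<otimes> A \<otimes> B \<otimes> C) \<Zsemi> (Im 1 \<otimes> Sy 1 1 \<otimes> Im 1)) \<Zsemi> (an \<otimes> an) \<Zsemi> ad"
    using t by (simp add: s4 Sq_assoc)
  also have "\<dots> = (cpn n \<Zsemi> (Im n \<otimes> cpn n) \<Zsemi> (cpn n \<otimes> Im n \<otimes> Im n) \<Zsemi> (Im n \<otimes> Sy n n \<otimes> Im n)) \<Zsemi> (A \<otimes> B \<otimes> A \<otimes> C) \<Zsemi> (an \<otimes> an) \<Zsemi> ad"
    using t by (simp add: s5 Sq_assoc)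
  also have "\<dots> = (cpn n \<Zsemi> (cpn n \<otimes> cpn n)) \<Zsemi> (A \<otimes> B \<otimes> A \<otimes> C) \<Zsemi> (an \<otimes> an) \<Zsemi> ad"
    by (simp only: W_dist)
  also have "\<dots> = cpn n \<Zsemi> ((cpn n \<otimes> cpn n) \<Zsemi> (A \<otimes> B \<otimes> A \<otimes> C) \<Zsemi> (an \<otimes> an)) \<Zsemi> ad"
    using t by (simp add: Sq_assoc)
  also have "\<dots> = cpn n \<Zsemi> (bin n an A B \<otimes> bin n an A C) \<Zsemi> ad"
    using bin_par2[OF assms(1,2,1,3)] by simp
  also have "\<dots> = bin n ad (bin n an A B) (bin n an A C)" by (simp only: bin_def[of n ad "bin n an A B"])
  finally show ?thesis .
qed

abbreviation P :: "nat \<Rightarrow> mor \<Rightarrow> mor \<Rightarrow> mor" where "P N \<equiv> bin N ad"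
abbreviation M :: "nat \<Rightarrow> mor \<Rightarrow> mor \<Rightarrow> mor" where "M N \<equiv> bin N an"
definition z0 :: "nat \<Rightarrow> mor" where "z0 N = dcn N \<Zsemi> zr"
definition o1 :: "nat \<Rightarrow> mor" where "o1 N = dcn N \<Zsemi> on"

lemma ty1_P[simp]: "ty1 N A \<Longrightarrow> ty1 N B \<Longrightarrow> ty1 N (P N A B)" by (rule ty1_bin) simp_all
lemma ty1_M[simp]: "ty1 N A \<Longrightarrow> ty1 N B \<Longrightarrow> ty1 N (M N A B)" by (rule ty1_bin) simp_all
lemma ty1_z0[simp]: "ty1 N (z0 N)" by (simp add: z0_def ty1_def)
lemma ty1_o1[simp]: "ty1 N (o1 N)" by (simp add: o1_def ty1_def)

lemma pc: "ty1 N A \<Longrightarrow> ty1 N B \<Longrightarrow> P N A B = P N B A" by (rule bin_comm) (simp_all add: add_comm)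
lemma mc: "ty1 N A \<Longrightarrow> ty1 N B \<Longrightarrow> M N A B = M N B A" by (rule bin_comm) (simp_all add: and_comm)
lemma pa: "ty1 N A \<Longrightarrow> ty1 N B \<Longrightarrow> ty1 N C \<Longrightarrow> P N (P N A B) C = P N A (P N B C)"
  by (rule bin_assoc) (simp_all add: add_assoc)
lemma ma: "ty1 N A \<Longrightarrow> ty1 N B \<Longrightarrow> ty1 N C \<Longrightarrow> M N (M N A B) C = M N A (M N B C)"
  by (rule bin_assoc) (simp_all add: and_assoc)
lemma p0: "ty1 N A \<Longrightarrow> P N (z0 N) A = A" unfolding z0_def by (rule bin_unit) (simp_all add: add_unitl)
lemma m1: "ty1 N A \<Longrightarrow> M N (o1 N) A = A" unfolding o1_def by (rule bin_unit) (simp_all add: and_unitl)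
lemma p0r: "ty1 N A \<Longrightarrow> P N A (z0 N) = A"
proof -
  assume a: "ty1 N A"
  have "P N A (z0 N) = P N (z0 N) A" by (rule pc) (simp_all add: a)
  then show ?thesis using p0[OF a] by simp
qed
lemma m1r: "ty1 N A \<Longrightarrow> M N A (o1 N) = A"
proof -
  assume a: "ty1 N A"
  have "M N A (o1 N) = M N (o1 N) A" by (rule mc) (simp_all add: a)
  then show ?thesis using m1[OF a] by simp
qed
lemma pss: "ty1 N A \<Longrightarrow> P N A A = z0 N" unfolding z0_def by (rule pl_self)
lemma mss: "ty1 N A \<Longrightarrow> M N A A = A" by (rule ml_idem)
lemma dl: "ty1 N A \<Longrightarrow> ty1 N B \<Longrightarrow> ty1 N C \<Longrightarrow> M N A (P N B C) = P N (M N A B) (M N A C)"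
  by (rule distr)
lemma dr: "ty1 N A \<Longrightarrow> ty1 N B \<Longrightarrow> ty1 N C \<Longrightarrow> M N (P N B C) A = P N (M N B A) (M N C A)"
proof -
  assume a: "ty1 N A" "ty1 N B" "ty1 N C"
  have "M N (P N B C) A = M N A (P N B C)" by (rule mc) (simp_all add: a)
  also have "\<dots> = P N (M N A B) (M N A C)" by (rule dl) (simp_all add: a)
  also have "M N A B = M N B A" by (rule mc) (simp_all add: a)
  also have "M N A C = M N C A" by (rule mc) (simp_all add: a)
  finally show ?thesis .
qed

lemma m0: "ty1 N A \<Longrightarrow> M N A (z0 N) = z0 N"
proof -
  assume a: "ty1 N A"
  have "M N A (z0 N) = M N A (P N (z0 N) (z0 N))" using p0[of N "z0 N"] by simp
  also have "\<dots> = P N (M N A (z0 N)) (M N A (z0 N))" by (rule dl) (simp_all add: a)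
  also have "\<dots> = z0 N" by (rule pss) (simp add: a)
  finally show ?thesis .
qed
lemma m0l: "ty1 N A \<Longrightarrow> M N (z0 N) A = z0 N"
proof -
  assume a: "ty1 N A"
  have "M N (z0 N) A = M N A (z0 N)" by (rule mc) (simp_all add: a)
  then show ?thesis using m0[OF a] by simp
qed

lemma mdup: "ty1 N Y \<Longrightarrow> ty1 N A \<Longrightarrow> ty1 N B \<Longrightarrow> M N Y (M N A B) = M N (M N Y A) (M N Y B)"
proof -
  assume a: "ty1 N Y" "ty1 N A" "ty1 N B"
  have "M N (M N Y A) (M N Y B) = M N Y (M N A (M N Y B))" by (rule ma) (simp_all add: a)
  also have "M N A (M N Y B) = M N (M N A Y) B" by (rule ma[symmetric]) (simp_all add: a)
  also have "M N A Y = M N Y A" by (rule mc) (simp_all add: a)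
  also have "M N (M N Y A) B = M N Y (M N A B)" by (rule ma) (simp_all add: a)
  also have "M N Y (M N Y (M N A B)) = M N (M N Y Y) (M N A B)" by (rule ma[symmetric]) (simp_all add: a)
  also have "M N Y Y = Y" by (rule mss) (simp_all add: a)
  finally show ?thesis ..
qed

lemma den_Pl: "den N (Pl s t) = P N (den N s) (den N t)" by (simp add: bin_def)
lemma den_Ml: "den N (Ml s t) = M N (den N s) (den N t)" by (simp add: bin_def)
lemma den_Zt: "den N Zt = z0 N" by (simp add: z0_def)
lemma den_Ot: "den N Ot = o1 N" by (simp add: o1_def)
lemma ty1_den[simp]: "bnd N t \<Longrightarrow> ty1 N (den N t)" by (simp add: ty1_def)

declare den.simps(2-5)[simp del]

definition sbk :: "nat \<Rightarrow> bt \<Rightarrow> bt \<Rightarrow> bt" where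
  "sbk k c s = subst (\<lambda>i. if i = k then c else V i) s"

lemma sbk_simps[simp]:
  "sbk k c (V i) = (if i = k then c else V i)" "sbk k c Zt = Zt" "sbk k c Ot = Ot"
  "sbk k c (Pl a b) = Pl (sbk k c a) (sbk k c b)" "sbk k c (Ml a b) = Ml (sbk k c a) (sbk k c b)"
  by (simp_all add: sbk_def)

lemma bnd_sbk: "bnd N s \<Longrightarrow> bnd N c \<Longrightarrow> bnd N (sbk k c s)"
  by (induction s) auto

lemma bnd_sbk_down: "bnd (Suc k) s \<Longrightarrow> bnd 0 c \<Longrightarrow> bnd k (sbk k c s)"
  by (induction s) (auto intro: bnd_mono)

lemma evalt_sbk: "bnd 0 c \<Longrightarrow> k < length xs \<Longrightarrow> evalt xs (sbk k c s) = evalt (xs[k := evalt [] c]) s"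
proof (induction s)
  case (V i)
  have "evalt xs c = evalt [] c" using V.prems by (induction c) auto
  then show ?case using V by auto
qed auto

lemma K:
  assumes Y: "ty1 N Y" and c: "bnd 0 c" and k: "k < N"
    and base: "M N Y (den N (V k)) = M N Y (den N c)"
  shows "bnd N s \<Longrightarrow> M N Y (den N s) = M N Y (den N (sbk k c s))"
proof (induction s)
  case (V i) then show ?case using base by auto
next
  case (Pl a b)
  have cN: "bnd N c" using c bnd_mono by blast
  have b: "bnd N a" "bnd N b" "bnd N (sbk k c a)" "bnd N (sbk k c b)" using Pl.prems bnd_sbk cN by auto
  show ?case using Pl b Y by (simp add: den_Pl dl)
next
  case (Ml a b)
  have cN: "bnd N c" using c bnd_mono by blast
  have b: "bnd N a" "bnd N b" "bnd N (sbk k c a)" "bnd N (sbk k c b)" using Ml.prems bnd_sbk cN by auto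
  have "M N Y (den N (Ml a b)) = M N (M N Y (den N a)) (M N Y (den N b))"
    unfolding den_Ml by (rule mdup) (use b Y in simp_all)
  also have "\<dots> = M N (M N Y (den N (sbk k c a))) (M N Y (den N (sbk k c b)))" using Ml b by simp
  also have "\<dots> = M N Y (den N (sbk k c (Ml a b)))"
    unfolding sbk_simps den_Ml by (rule mdup[symmetric]) (use b Y in simp_all)
  finally show ?case .
qed auto


lemma Sh:
  assumes s: "bnd N s" and k: "k < N"
  shows "den N s = P N (M N (den N (V k)) (den N (sbk k Ot s))) (M N (P N (den N (V k)) (o1 N)) (den N (sbk k Zt s)))"
proof -
  define X where "X = den N (V k)"
  define X' where "X' = P N X (o1 N)"
  have tX: "ty1 N X" unfolding X_def by (rule ty1_den) (simp add: k)
  have tX': "ty1 N X'" using tX by (simp add: X'_def)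
  have tS: "ty1 N (den N s)" using s by simp
  have one: "o1 N = P N X X'"
  proof -
    have "P N X X' = P N (P N X X) (o1 N)" unfolding X'_def by (rule pa[symmetric]) (simp_all add: tX)
    also have "\<dots> = o1 N" using pss[OF tX] p0 by simp
    finally show ?thesis ..
  qed
  have "den N s = M N (o1 N) (den N s)" using m1[OF tS] by simp
  also have "\<dots> = P N (M N X (den N s)) (M N X' (den N s))" unfolding one by (rule dr) (simp_all add: tX tX' tS)
  also have "M N X (den N s) = M N X (den N (sbk k Ot s))"
  proof (rule K[OF tX _ k _ s])
    show "M N X (den N (V k)) = M N X (den N Ot)"
      using mss[OF tX] m1r[OF tX] by (simp add: X_def den_Ot)
  qed simp
  also have "M N X' (den N s) = M N X' (den N (sbk k Zt s))"
  proof (rule K[OF tX' _ k _ s])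
    have "M N X' X = P N (M N X X) (M N (o1 N) X)" unfolding X'_def by (rule dr) (simp_all add: tX)
    also have "\<dots> = z0 N" using mss[OF tX] m1[OF tX] pss[OF tX] by simp
    finally have "M N X' X = z0 N" .
    then show "M N X' (den N (V k)) = M N X' (den N Zt)"
      unfolding X_def[symmetric] den_Zt using m0[OF tX'] by simp
  qed simp
  finally show ?thesis unfolding X'_def X_def .
qed

lemma evalt_closed: "bnd 0 s \<Longrightarrow> evalt xs s = evalt [] s"
  by (induction s) auto

lemma closed_den: "bnd 0 s \<Longrightarrow> den N s = (if evalt [] s then o1 N else z0 N)"
proof (induction s)
  case (Pl a b)
  then show ?case by (auto simp: den_Pl p0 p0r pss)
next
  case (Ml a b)
  then show ?case by (auto simp: den_Ml m0 m0l m1)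
qed (auto simp: den_Zt den_Ot)

lemma comp_k: "k \<le> N \<Longrightarrow> bnd k s \<Longrightarrow> bnd k t \<Longrightarrow> (\<forall>xs. length xs = N \<longrightarrow> evalt xs s = evalt xs t) \<Longrightarrow> den N s = den N t"
proof (induction k arbitrary: s t)
  case 0
  have "evalt (replicate N False) s = evalt (replicate N False) t" using 0 by simp
  then have "evalt [] s = evalt [] t" using evalt_closed 0 by metis
  then show ?case using closed_den 0 by simp
next
  case (Suc k)
  have k: "k < N" using Suc by simp
  have bs: "bnd N s" "bnd N t" using Suc.prems bnd_mono by blast+
  have e1: "den N (sbk k Ot s) = den N (sbk k Ot t)"
  proof (rule Suc.IH)
    show "bnd k (sbk k Ot s)" "bnd k (sbk k Ot t)" using Suc.prems bnd_sbk_down by auto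
    show "\<forall>xs. length xs = N \<longrightarrow> evalt xs (sbk k Ot s) = evalt xs (sbk k Ot t)"
      using Suc.prems k evalt_sbk[of Ot k] by simp
  qed (use Suc in simp)
  have e0: "den N (sbk k Zt s) = den N (sbk k Zt t)"
  proof (rule Suc.IH)
    show "bnd k (sbk k Zt s)" "bnd k (sbk k Zt t)" using Suc.prems bnd_sbk_down by auto
    show "\<forall>xs. length xs = N \<longrightarrow> evalt xs (sbk k Zt s) = evalt xs (sbk k Zt t)"
      using Suc.prems k evalt_sbk[of Zt k] by simp
  qed (use Suc in simp)
  show ?case using Sh[OF bs(1) k] Sh[OF bs(2) k] e1 e0 by simp
qed

lemma complete_den: "bnd N s \<Longrightarrow> bnd N t \<Longrightarrow> (\<forall>xs. length xs = N \<longrightarrow> evalt xs s = evalt xs t) \<Longrightarrow> den N s = den N t"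
  using comp_k[of N N s t] by simp

theorem completeness:
  assumes "typed p n m" "typed q n m" "\<forall>xs. length xs = n \<longrightarrow> sem p xs = sem q xs"
  shows "eqE p q"
proof -
  have w: "wf p" "wf q" "cdom p = n" "cdom q = n" "ccod p = m" "ccod q = m"
    using assms unfolding typed_def by auto
  have "evc p = evc q"
  proof (rule complete_tm[OF w])
    show "\<forall>k<m. den n (tm p k) = den n (tm q k)"
    proof (intro allI impI)
      fix k assume k: "k < m"
      show "den n (tm p k) = den n (tm q k)"
      proof (rule complete_den)
        show "bnd n (tm p k)" using tm_bnd[of p k] w k by simp
        show "bnd n (tm q k)" using tm_bnd[of q k] w k by simp
        show "\<forall>xs. length xs = n \<longrightarrow> evalt xs (tm p k) = evalt xs (tm q k)"
          using tm_sem[of p _ k] tm_sem[of q _ k] w k assms(3) by simp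
      qed
    qed
  qed
  then show ?thesis using evc_eq_eqE w by simp
qed

theorem mainTheorem6:
  assumes "typed c a b" and "typed d a b"
    and "safe c" and "safe d"
    and "eqE c d"
  shows "eqE (Rt c) (Rt d)"
proof -
  have "\<forall>xs. length xs = a \<longrightarrow> sem c xs = sem d xs"
    using eqE_sound[OF assms(5)] assms(1) unfolding typ_eq_def typed_def by simp
  then have s: "\<forall>zs. length zs = a + b \<longrightarrow> sem (Rt c) zs = sem (Rt d) zs"
    using Rt_sem_det assms by blast
  have "typed (Rt c) (a + b) a" "typed (Rt d) (a + b) a"
    using Rt_props[of c] Rt_props[of d] assms(1,2) unfolding typed_def by auto
  then show ?thesis using completeness s by blast
qed

end
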